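(* Let $\vec{\sigma}=(\sigma_1,\sigma_2,\ldots)$ be a weighting sequence with mean $\alpha$, i.e. $\lim_{n\to\infty}\frac1n\sum_{k=1}^n\sigma_k=\alpha$. For $0<x<1$ consider the $\vec{\sigma}$-weighted Boltzmann measure $\mathbb{P}_{\vec{\sigma},x}$ on permutations, let $N$ be the size of the ground set of a random permutation, and let $x=x(\mu)$ be chosen so that $\mathbb{E}_{\vec{\sigma},x}(N)=\mu$. Let $X$ be the number of cycles of the random permutation. Then $\mathbb{E}_{\vec{\sigma},x}(X)=\mathbb{V}_{\vec{\sigma},x}(X)\sim\alpha\log\mu$ as $x\to1^-$ or $\mu\to\infty$.
   Context: A weighting sequence is a sequence $\vec{\sigma}=(\sigma_1,\sigma_2,\ldots)$ of nonnegative reals; the weight of $\pi\in S_n$ is $w_{\vec{\sigma}}(\pi)=\prod_i\sigma_i^{c_i(\pi)}$ with $c_i(\pi)$ the number of $i$-cycles of $\pi$. The $\vec{\sigma}$-weighted Boltzmann measure with parameter $x>0$ is the probability measure on $\bigcup_{k\ge0}S_k$ given by \[ \mathbb{P}_{\vec{\sigma},x}(\pi)=\frac{w_{\vec{\sigma}}(\pi)\,x^{|\pi|}/|\pi|!}{\exp\left(\sum_{k\ge1}\sigma_kx^k/k\right)}, \] where $|\pi|$ is the size of the ground set of $\pi$; $\mathbb{E}_{\vec{\sigma},x}$ and $\mathbb{V}_{\vec{\sigma},x}$ are expectation and variance under it. *)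

theory Defs
  imports "HOL-Probability.Probability" "HOL-Combinatorics.Permutations"
    "HOL-Library.Landau_Symbols"
begin

definition perm_space :: "(nat \<times> (nat \<Rightarrow> nat)) set" where
  "perm_space = (SIGMA n:UNIV. {p. p permutes {..<n}})"

definition pcycle :: "(nat \<Rightarrow> nat) \<Rightarrow> nat \<Rightarrow> nat set" where
  "pcycle p a = {(p ^^ k) a | k. True}"

definition cycles_of :: "nat \<Rightarrow> (nat \<Rightarrow> nat) \<Rightarrow> nat set set" where
  "cycles_of n p = pcycle p ` {..<n}"

definition ncyc :: "nat \<Rightarrow> nat \<Rightarrow> (nat \<Rightarrow> nat) \<Rightarrow> nat" where
  "ncyc i n p = card {C \<in> cycles_of n p. card C = i}"

text \<open>Weight w_sigma(pi) = prod_i sigma_i ^ c_i(pi) (sigma indexed from 1; sigma 0 unused).\<close>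
definition wt :: "(nat \<Rightarrow> real) \<Rightarrow> nat \<times> (nat \<Rightarrow> nat) \<Rightarrow> real" where
  "wt \<sigma> np = (\<Prod>i\<in>{1..fst np}. \<sigma> i ^ ncyc i (fst np) (snd np))"

definition bnorm :: "(nat \<Rightarrow> real) \<Rightarrow> real \<Rightarrow> real" where
  "bnorm \<sigma> x = exp (\<Sum>k. \<sigma> (Suc k) * x ^ Suc k / real (Suc k))"

definition boltzmann :: "(nat \<Rightarrow> real) \<Rightarrow> real \<Rightarrow> (nat \<times> (nat \<Rightarrow> nat)) measure" where
  "boltzmann \<sigma> x = density (count_space perm_space)
     (\<lambda>np. ennreal (wt \<sigma> np * x ^ fst np / fact (fst np) / bnorm \<sigma> x))"

definition bexp :: "(nat \<Rightarrow> real) \<Rightarrow> real \<Rightarrow> (nat \<times> (nat \<Rightarrow> nat) \<Rightarrow> real) \<Rightarrow> real" where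
  "bexp \<sigma> x Y = (\<integral>np. Y np \<partial>boltzmann \<sigma> x)"

definition bvar :: "(nat \<Rightarrow> real) \<Rightarrow> real \<Rightarrow> (nat \<times> (nat \<Rightarrow> nat) \<Rightarrow> real) \<Rightarrow> real" where
  "bvar \<sigma> x Y = (\<integral>np. (Y np - bexp \<sigma> x Y)^2 \<partial>boltzmann \<sigma> x)"

definition gsize :: "nat \<times> (nat \<Rightarrow> nat) \<Rightarrow> real" where
  "gsize np = real (fst np)"

definition ncycles :: "nat \<times> (nat \<Rightarrow> nat) \<Rightarrow> real" where
  "ncycles np = real (card (cycles_of (fst np) (snd np)))"

end

theory Submission
  imports Defs "HOL-Combinatorics.Orbits" "HOL-Combinatorics.Cycles" "HOL-Real_Asymp.Real_Asymp"
begin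


definition comb :: "nat list \<Rightarrow> (nat \<Rightarrow> nat) \<Rightarrow> nat \<Rightarrow> nat" where
  "comb cs r = cycle_of_list cs \<circ> r"

lemma cycle_funpow_nth:
  assumes "distinct cs" "i < length cs"
  shows "(cycle_of_list cs ^^ n) (cs ! i) = cs ! ((n + i) mod length cs)"
proof -
  have "map (cycle_of_list cs ^^ n) cs = rotate n cs" by (rule cyclic_rotation[OF assms(1)])
  hence "(cycle_of_list cs ^^ n) (cs ! i) = rotate n cs ! i"
    by (metis assms(2) nth_map)
  also have "\<dots> = cs ! ((n + i) mod length cs)" using assms(2) by (simp add: nth_rotate)
  finally show ?thesis .
qed

lemma orbit_cycle_of_list:
  assumes "distinct cs" "y \<in> set cs"
  shows "orbit (cycle_of_list cs) y = set cs"
proof -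
  obtain i where i: "i < length cs" "y = cs ! i" using assms(2) by (metis in_set_conv_nth)
  have "orbit (cycle_of_list cs) y = {(cycle_of_list cs ^^ n) y | n. True}"
    by (rule orbit_altdef_permutation[OF permutation_of_cycle])
  also have "\<dots> = set cs"
  proof (intro set_eqI iffI)
    fix z assume "z \<in> {(cycle_of_list cs ^^ n) y | n. True}"
    then obtain n where "z = (cycle_of_list cs ^^ n) y" by auto
    thus "z \<in> set cs" using i assms cycle_funpow_nth[OF assms(1) i(1), of n]
      by (metis length_pos_if_in_set mod_less_divisor nth_mem)
  next
    fix z assume "z \<in> set cs"
    then obtain j where j: "j < length cs" "z = cs ! j" by (metis in_set_conv_nth)
    have "(cycle_of_list cs ^^ (j + length cs - i)) y = cs ! ((j + length cs - i + i) mod length cs)"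
      using cycle_funpow_nth[OF assms(1) i(1)] i by simp
    also have "\<dots> = z" using i j by simp
    finally show "z \<in> {(cycle_of_list cs ^^ n) y | n. True}" by blast
  qed
  finally show ?thesis .
qed

lemma cyclic_on_cycle_of_list:
  assumes "distinct cs" "cs \<noteq> []"
  shows "cyclic_on (cycle_of_list cs) (set cs)"
  using assms orbit_cycle_of_list[OF assms(1)] unfolding cyclic_on_def
  by (metis last_in_set)

lemma comb_props:
  assumes d: "distinct cs" and ne: "cs \<noteq> []" and r: "r permutes B" and disj: "set cs \<inter> B = {}"
  shows "comb cs r permutes (set cs \<union> B)"
    and "\<And>y. y \<in> set cs \<Longrightarrow> orbit (comb cs r) y = set cs"
    and "\<And>y. y \<in> B \<Longrightarrow> orbit (comb cs r) y = orbit r y"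
    and "\<And>y. y \<in> set cs \<Longrightarrow> comb cs r y = cycle_of_list cs y"
    and "\<And>y. y \<in> B \<Longrightarrow> comb cs r y = r y"
    and "perm_restrict (comb cs r) B = r"
proof -
  have c: "cycle_of_list cs permutes set cs" by (rule cycle_permutes)
  show P: "comb cs r permutes (set cs \<union> B)" unfolding comb_def
    by (rule permutes_compose[OF permutes_subset[OF r] permutes_subset[OF c]]) auto
  show A: "\<And>y. y \<in> set cs \<Longrightarrow> comb cs r y = cycle_of_list cs y"
    unfolding comb_def using r disj by (metis comp_apply disjoint_iff permutes_not_in)
  show Bq: "\<And>y. y \<in> B \<Longrightarrow> comb cs r y = r y"
    unfolding comb_def using r disj c
    by (metis comp_apply disjoint_iff permutes_in_image permutes_not_in)
  have cyc: "cyclic_on (comb cs r) (set cs)" unfolding comb_def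
    by (rule permutes_comp_preserves_cyclic1[OF r cyclic_on_cycle_of_list[OF d ne], of "set cs"])
       (use disj in auto)
  show "\<And>y. y \<in> set cs \<Longrightarrow> orbit (comb cs r) y = set cs"
    using orbit_cyclic_eq3[OF cyc] by blast
  show "\<And>y. y \<in> B \<Longrightarrow> orbit (comb cs r) y = orbit r y"
  proof -
    fix y assume "y \<in> B"
    have "comb cs r \<in> B \<rightarrow> B" using Bq r permutes_in_image by fastforce
    thus "orbit (comb cs r) y = orbit r y" by (rule orbit_cong0[OF \<open>y \<in> B\<close>]) (use Bq in auto)
  qed
  show "perm_restrict (comb cs r) B = r"
    using Bq r by (auto simp: fun_eq_iff perm_restrict_def permutes_not_in)
qed

lemma comb_funpow:
  assumes d: "distinct cs" and ne: "cs \<noteq> []" and r: "r permutes B" and disj: "set cs \<inter> B = {}"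
  shows "(comb cs r ^^ n) (hd cs) = cs ! (n mod length cs)"
proof -
  have "(comb cs r ^^ n) (hd cs) = (cycle_of_list cs ^^ n) (hd cs) \<and> (comb cs r ^^ n) (hd cs) \<in> set cs"
  proof (induction n)
    case 0 then show ?case using ne by simp
  next
    case (Suc n)
    have e: "(comb cs r ^^ n) (hd cs) = (cycle_of_list cs ^^ n) (hd cs)" and m: "(comb cs r ^^ n) (hd cs) \<in> set cs"
      using Suc by auto
    have "(comb cs r ^^ Suc n) (hd cs) = comb cs r ((comb cs r ^^ n) (hd cs))" by simp
    also have "\<dots> = cycle_of_list cs ((comb cs r ^^ n) (hd cs))" by (rule comb_props(4)[OF assms m])
    finally have 1: "(comb cs r ^^ Suc n) (hd cs) = (cycle_of_list cs ^^ Suc n) (hd cs)" using e by simp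
    have "cycle_of_list cs ((comb cs r ^^ n) (hd cs)) \<in> set cs"
      using m permutes_in_image[OF cycle_permutes[of cs]] by blast
    with 1 e show ?case by simp
  qed
  thus ?thesis using cycle_funpow_nth[OF d, of 0 n] ne by (simp add: hd_conv_nth)
qed

lemma support_comb:
  assumes d: "distinct cs" and ne: "cs \<noteq> []" and r: "r permutes B" and disj: "set cs \<inter> B = {}"
  shows "support (comb cs r) (hd cs) = cs"
proof -
  let ?p = "comb cs r"
  have f: "\<And>n. (?p ^^ n) (hd cs) = cs ! (n mod length cs)" by (rule comb_funpow[OF assms])
  have lp: "least_power ?p (hd cs) = length cs"
    unfolding least_power_def
  proof (rule Least_equality)
    show "(?p ^^ length cs) (hd cs) = hd cs \<and> 0 < length cs" using f ne by (simp add: hd_conv_nth)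
  next
    fix y assume y: "(?p ^^ y) (hd cs) = hd cs \<and> 0 < y"
    hence "cs ! (y mod length cs) = cs ! 0" using f ne by (simp add: hd_conv_nth)
    moreover have "y mod length cs < length cs" "0 < length cs" using ne by auto
    ultimately have "y mod length cs = 0" using nth_eq_iff_index_eq[OF d] by blast
    thus "length cs \<le> y" using y by (simp add: dvd_imp_le mod_eq_0_iff_dvd)
  qed
  show ?thesis unfolding lp f
    by (rule nth_equalityI) auto
qed

lemma support_props:
  assumes p: "p permutes A" and fin: "finite A" and a: "a \<in> A"
  shows "distinct (support p a)" "support p a \<noteq> []" "hd (support p a) = a"
    "set (support p a) = orbit p a" "set (support p a) \<subseteq> A"
    "perm_restrict p (A - set (support p a)) permutes (A - set (support p a))"
    "comb (support p a) (perm_restrict p (A - set (support p a))) = p"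
proof -
  have pp: "permutation p" using p fin permutation_permutes by blast
  show "distinct (support p a)" by (rule cycle_of_permutation[OF pp])
  have lp: "least_power p a > 0" using least_power_of_permutation(2)[OF pp] .
  show ne: "support p a \<noteq> []" using lp by simp
  show "hd (support p a) = a" using lp by (simp add: hd_map)
  show so: "set (support p a) = orbit p a"
    unfolding support_set[OF pp] orbit_altdef_permutation[OF pp] by auto
  show "set (support p a) \<subseteq> A" unfolding so by (rule permutes_orbit_subset[OF p a])
  show pr: "perm_restrict p (A - set (support p a)) permutes (A - set (support p a))"
    unfolding so by (rule perm_restrict_diff_cyclic[OF p cyclic_on_orbit[OF p fin]])
  have cyc: "cyclic_on p (orbit p a)" by (rule cyclic_on_orbit[OF p fin])
  show "comb (support p a) (perm_restrict p (A - set (support p a))) = p"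
  proof
    fix y
    show "comb (support p a) (perm_restrict p (A - set (support p a))) y = p y"
    proof (cases "y \<in> set (support p a)")
      case True
      then show ?thesis unfolding comb_def
        using cycle_restrict[OF pp True] by (simp add: perm_restrict_def)
    next
      case False
      have "p y \<notin> set (support p a)"
        using False cyclic_on_f_in[OF p cyc] so by auto
      show ?thesis
      proof (cases "y \<in> A")
        case True
        then have "perm_restrict p (A - set (support p a)) y = p y"
          using False by (simp add: perm_restrict_def)
        then show ?thesis unfolding comb_def using id_outside_supp[OF \<open>p y \<notin> set (support p a)\<close>] by simp
      next
        case nA: False
        then have "perm_restrict p (A - set (support p a)) y = y"
          by (simp add: perm_restrict_def)
        then show ?thesis unfolding comb_def using id_outside_supp[OF False] nA p
          by (simp add: permutes_not_in)
      qed
    qed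
  qed
qed

definition cw :: "(nat \<Rightarrow> real) \<Rightarrow> (nat \<Rightarrow> real) \<Rightarrow> nat set \<Rightarrow> (nat \<Rightarrow> nat) \<Rightarrow> real" where
  "cw f h A p = (\<Prod>C \<in> orbit p ` A. f (card C)) * h (card (orbit p ` A))"

fun Gf :: "(nat \<Rightarrow> real) \<Rightarrow> nat \<Rightarrow> (nat \<Rightarrow> real) \<Rightarrow> real" where
  "Gf f 0 h = h 0"
| "Gf f (Suc m) h = (\<Sum>k\<le>m. fact m / fact (m - k) * f (Suc k) * Gf f (m - k) (h \<circ> Suc))"

lemma cw_comb:
  assumes d: "distinct cs" and ne: "cs \<noteq> []" and r: "r permutes B" and disj: "set cs \<inter> B = {}"
    and fin: "finite B"
  shows "cw f h (set cs \<union> B) (comb cs r) = f (length cs) * cw f (h \<circ> Suc) B r"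
proof -
  let ?p = "comb cs r"
  have 1: "orbit ?p ` (set cs \<union> B) = insert (set cs) (orbit r ` B)"
  proof -
    have "orbit ?p ` set cs = (\<lambda>_. set cs) ` set cs"
      by (rule image_cong) (use comb_props(2)[OF d ne r disj] in auto)
    hence "orbit ?p ` set cs = {set cs}" using ne by (simp add: image_constant_conv)
    moreover have "orbit ?p ` B = orbit r ` B" using comb_props(3)[OF d ne r disj] by auto
    ultimately show ?thesis by (auto simp: image_Un)
  qed
  have 2: "set cs \<notin> orbit r ` B"
  proof
    assume "set cs \<in> orbit r ` B"
    then obtain y where "y \<in> B" "set cs = orbit r y" by auto
    then have "set cs \<subseteq> B" using permutes_orbit_subset[OF r] by auto
    then have "set cs = set cs \<inter> B" by (rule Int_absorb2[symmetric])
    then have "set cs = {}" using disj by simp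
    then show False using ne by simp
  qed
  have 3: "finite (orbit r ` B)" by (rule finite_imageI[OF fin])
  have 4: "card (set cs) = length cs" by (rule distinct_card[OF d])
  have "cw f h (set cs \<union> B) (comb cs r) = (\<Prod>C \<in> insert (set cs) (orbit r ` B). f (card C)) * h (card (insert (set cs) (orbit r ` B)))"
    unfolding cw_def 1 ..
  also have "\<dots> = f (card (set cs)) * (\<Prod>C \<in> orbit r ` B. f (card C)) * h (Suc (card (orbit r ` B)))"
    by (subst prod.insert[OF 3 2], subst card_insert_disjoint[OF 3 2]) simp
  finally show ?thesis unfolding cw_def 4 by simp
qed

lemma real_prod_fact:
  assumes "k \<le> m"
  shows "real (\<Prod>{m - k + 1..m}) = fact m / fact (m - k)"
proof -
  have "\<Prod>{m - k + 1..m} = prod Suc {m - k..<m}"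
  proof -
    have "{m - k + 1..m} = Suc ` {m - k..<m}" using assms
      by (simp add: image_Suc_atLeastLessThan atLeastLessThanSuc_atLeastAtMost)
    moreover have "\<Prod>(Suc ` {m - k..<m}) = prod Suc {m - k..<m}"
      by (simp add: prod.reindex del: image_Suc_atLeastLessThan)
    ultimately show ?thesis by simp
  qed
  moreover have "(fact m :: real) = of_nat (prod Suc {m - k..<m}) * fact (m - k)"
    by (rule fact_split[OF assms])
  ultimately show ?thesis by simp
qed

lemma count_perms:
  assumes "finite A"
  shows "(\<Sum>p \<in> {p. p permutes A}. cw f h A p) = Gf f (card A) h"
  using assms
proof (induction "card A" arbitrary: A h rule: less_induct)
  case less
  show ?case
  proof (cases "A = {}")
    case True
    then show ?thesis by (simp add: cw_def)
  next
    case False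
    then obtain a where a: "a \<in> A" by auto
    obtain m where m: "card A = Suc m" using False less.prems by (metis card_0_eq not0_implies_Suc)
    define CS where "CS = {cs. \<exists>bs. cs = a # bs \<and> distinct cs \<and> set cs \<subseteq> A}"
    define PP where "PP = (SIGMA cs:CS. {r. r permutes (A - set cs)})"
    define L where "L = {bs. distinct bs \<and> set bs \<subseteq> A - {a}}"
    have finL: "finite L"
    proof (rule finite_subset)
      show "L \<subseteq> {xs. set xs \<subseteq> A \<and> length xs \<le> card A}"
        unfolding L_def using less.prems by clarsimp (metis distinct_card card_mono Diff_subset order_trans)
      show "finite {xs. set xs \<subseteq> A \<and> length xs \<le> card A}"
        by (rule finite_lists_length_le[OF less.prems])
    qed
    have CSL: "CS = Cons a ` L" unfolding CS_def L_def using a by (auto simp: image_iff)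
    have finCS: "finite CS" unfolding CSL using finL by simp
    have finPP: "finite PP" unfolding PP_def using finCS less.prems
      by (intro finite_SigmaI finite_permutations) auto
    have step1: "(\<Sum>p \<in> {p. p permutes A}. cw f h A p) = (\<Sum>(cs, r) \<in> PP. cw f h A (comb cs r))"
    proof (rule sum.reindex_bij_witness[where i = "\<lambda>(cs, r). comb cs r"
          and j = "\<lambda>p. (support p a, perm_restrict p (A - set (support p a)))"])
      fix p assume "p \<in> {p. p permutes A}"
      hence p: "p permutes A" by simp
      note sp = support_props[OF p less.prems a]
      show "(case (support p a, perm_restrict p (A - set (support p a))) of (cs, r) \<Rightarrow> comb cs r) = p"
        using sp by simp
      have "support p a = a # tl (support p a)" using sp(2,3) by (metis list.collapse)
      then show "(support p a, perm_restrict p (A - set (support p a))) \<in> PP"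
        unfolding PP_def CS_def
        by (intro SigmaI CollectI conjI exI[of _ "tl (support p a)"]) (use sp in simp_all)
      show "(case (support p a, perm_restrict p (A - set (support p a))) of (cs, r) \<Rightarrow> cw f h A (comb cs r)) = cw f h A p"
        using sp by simp
    next
      fix x assume "x \<in> PP"
      then obtain cs r bs where x: "x = (cs, r)" "cs = a # bs" "distinct cs" "set cs \<subseteq> A"
        "r permutes (A - set cs)"
        unfolding PP_def CS_def by auto
      have ne: "cs \<noteq> []" using x by simp
      have disj: "set cs \<inter> (A - set cs) = {}" by auto
      have U: "set cs \<union> (A - set cs) = A" using x by auto
      have "support (comb cs r) a = cs" using support_comb[OF x(3) ne x(5) disj] x by simp
      moreover have "perm_restrict (comb cs r) (A - set cs) = r" by (rule comb_props(6)[OF x(3) ne x(5) disj])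
      ultimately show "(support ((case x of (cs, r) \<Rightarrow> comb cs r)) a,
             perm_restrict ((case x of (cs, r) \<Rightarrow> comb cs r)) (A - set (support ((case x of (cs, r) \<Rightarrow> comb cs r)) a))) = x"
        using x by simp
      show "(case x of (cs, r) \<Rightarrow> comb cs r) \<in> {p. p permutes A}"
        using comb_props(1)[OF x(3) ne x(5) disj] U x by simp
    qed
    have step2: "(\<Sum>(cs, r) \<in> PP. cw f h A (comb cs r)) =
        (\<Sum>cs \<in> CS. f (length cs) * Gf f (Suc m - length cs) (h \<circ> Suc))"
    proof -
      have "(\<Sum>(cs, r) \<in> PP. cw f h A (comb cs r)) =
          (\<Sum>cs \<in> CS. \<Sum>r \<in> {r. r permutes (A - set cs)}. cw f h A (comb cs r))"
        unfolding PP_def using finCS less.prems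
        by (subst sum.Sigma) (auto intro: finite_permutations)
      also have "\<dots> = (\<Sum>cs \<in> CS. f (length cs) * Gf f (Suc m - length cs) (h \<circ> Suc))"
      proof (rule sum.cong[OF refl])
        fix cs assume "cs \<in> CS"
        then obtain bs where cs: "cs = a # bs" "distinct cs" "set cs \<subseteq> A" unfolding CS_def by auto
        have ne: "cs \<noteq> []" using cs by simp
        have disj: "set cs \<inter> (A - set cs) = {}" by auto
        have U: "set cs \<union> (A - set cs) = A" using cs by auto
        have finB: "finite (A - set cs)" using less.prems by simp
        have cardB: "card (A - set cs) = Suc m - length cs"
          using cs m less.prems by (simp add: card_Diff_subset distinct_card)
        have lt: "card (A - set cs) < card A" using cs m cardB by simp
        have "(\<Sum>r \<in> {r. r permutes (A - set cs)}. cw f h A (comb cs r)) =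
            (\<Sum>r \<in> {r. r permutes (A - set cs)}. f (length cs) * cw f (h \<circ> Suc) (A - set cs) r)"
          using cw_comb[OF cs(2) ne _ disj finB] U by (intro sum.cong) auto
        also have "\<dots> = f (length cs) * Gf f (card (A - set cs)) (h \<circ> Suc)"
          by (simp add: sum_distrib_left[symmetric] less.hyps[OF lt finB])
        finally show "(\<Sum>r \<in> {r. r permutes (A - set cs)}. cw f h A (comb cs r)) =
            f (length cs) * Gf f (Suc m - length cs) (h \<circ> Suc)" using cardB by simp
      qed
      finally show ?thesis .
    qed
    have step3: "(\<Sum>cs \<in> CS. f (length cs) * Gf f (Suc m - length cs) (h \<circ> Suc)) =
        (\<Sum>bs \<in> L. f (Suc (length bs)) * Gf f (m - length bs) (h \<circ> Suc))"
      unfolding CSL by (subst sum.reindex) (auto simp: inj_on_def)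
    have cardAa: "card (A - {a}) = m" using m a less.prems by simp
    have step4: "(\<Sum>bs \<in> L. f (Suc (length bs)) * Gf f (m - length bs) (h \<circ> Suc)) =
        (\<Sum>k\<le>m. fact m / fact (m - k) * f (Suc k) * Gf f (m - k) (h \<circ> Suc))"
    proof -
      have "(\<Sum>bs \<in> L. f (Suc (length bs)) * Gf f (m - length bs) (h \<circ> Suc)) =
          (\<Sum>k\<le>m. \<Sum>bs \<in> {bs \<in> L. length bs = k}. f (Suc (length bs)) * Gf f (m - length bs) (h \<circ> Suc))"
      proof (rule sum.group[symmetric, OF finL])
        show "finite {..m}" by simp
        show "length ` L \<subseteq> {..m}" unfolding L_def using less.prems cardAa
          by (auto simp: distinct_card[symmetric] intro!: card_mono)
      qed
      also have "\<dots> = (\<Sum>k\<le>m. fact m / fact (m - k) * f (Suc k) * Gf f (m - k) (h \<circ> Suc))"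
      proof (rule sum.cong[OF refl])
        fix k assume k: "k \<in> {..m}"
        have "{bs \<in> L. length bs = k} = {xs. length xs = k \<and> distinct xs \<and> set xs \<subseteq> A - {a}}"
          unfolding L_def by auto
        hence "card {bs \<in> L. length bs = k} = \<Prod>{m - k + 1..m}"
          using card_lists_distinct_length_eq[of "A - {a}" k] less.prems cardAa k by simp
        hence "real (card {bs \<in> L. length bs = k}) = fact m / fact (m - k)"
          using real_prod_fact[of k m] k by simp
        moreover have "(\<Sum>bs \<in> {bs \<in> L. length bs = k}. f (Suc (length bs)) * Gf f (m - length bs) (h \<circ> Suc))
            = real (card {bs \<in> L. length bs = k}) * (f (Suc k) * Gf f (m - k) (h \<circ> Suc))"
          by (simp add: sum_constant[symmetric] del: sum_constant)
        ultimately show "(\<Sum>bs \<in> {bs \<in> L. length bs = k}. f (Suc (length bs)) * Gf f (m - length bs) (h \<circ> Suc))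
            = fact m / fact (m - k) * f (Suc k) * Gf f (m - k) (h \<circ> Suc)" by simp
      qed
      finally show ?thesis .
    qed
    show ?thesis using step1 step2 step3 step4 m by simp
  qed
qed


lemma pcycle_orbit:
  assumes "p permutes {..<n}"
  shows "pcycle p a = orbit p a"
proof -
  have "permutation p" using assms permutation_permutes by blast
  thus ?thesis unfolding pcycle_def by (rule orbit_altdef_permutation[symmetric])
qed

lemma cycles_of_orbit:
  assumes "p permutes {..<n}"
  shows "cycles_of n p = orbit p ` {..<n}"
  unfolding cycles_of_def using pcycle_orbit[OF assms] by simp

lemma wt_prod:
  assumes p: "p permutes {..<n}"
  shows "wt \<sigma> (n, p) = (\<Prod>C \<in> orbit p ` {..<n}. \<sigma> (card C))"
proof -
  let ?S = "orbit p ` {..<n}"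
  have finS: "finite ?S" by simp
  have sub: "card ` ?S \<subseteq> {1..n}"
  proof
    fix i assume "i \<in> card ` ?S"
    then obtain a where a: "a < n" "i = card (orbit p a)" by auto
    have perm: "permutation p" using p permutation_permutes by blast
    have sub: "orbit p a \<subseteq> {..<n}" using permutes_orbit_subset[OF p] a by simp
    have fin: "finite (orbit p a)" using finite_subset[OF sub] by simp
    have "card (orbit p a) \<le> n" using card_mono[OF _ sub] by simp
    moreover have "card (orbit p a) \<ge> 1" using fin orbit_nonempty[of p a]
      by (simp add: Suc_leI card_gt_0_iff)
    ultimately show "i \<in> {1..n}" using a by simp
  qed
  have "(\<Prod>C \<in> ?S. \<sigma> (card C)) = (\<Prod>i\<in>{1..n}. \<Prod>C \<in> {C \<in> ?S. card C = i}. \<sigma> (card C))"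
    by (rule prod.group[symmetric, OF finS _ sub]) simp
  also have "\<dots> = (\<Prod>i\<in>{1..n}. \<sigma> i ^ card {C \<in> ?S. card C = i})"
  proof (rule prod.cong[OF refl])
    fix i
    have "(\<Prod>C \<in> {C \<in> ?S. card C = i}. \<sigma> (card C)) = (\<Prod>C \<in> {C \<in> ?S. card C = i}. \<sigma> i)"
      by (rule prod.cong) auto
    thus "(\<Prod>C \<in> {C \<in> ?S. card C = i}. \<sigma> (card C)) = \<sigma> i ^ card {C \<in> ?S. card C = i}" by simp
  qed
  finally show ?thesis by (simp add: wt_def ncyc_def cycles_of_orbit[OF p])
qed

lemma sum_wt_Gf:
  "(\<Sum>p\<in>{p. p permutes {..<n}}. wt \<sigma> (n, p) * h (card (cycles_of n p))) = Gf \<sigma> n h"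
proof -
  have "(\<Sum>p\<in>{p. p permutes {..<n}}. wt \<sigma> (n, p) * h (card (cycles_of n p))) =
      (\<Sum>p\<in>{p. p permutes {..<n}}. cw \<sigma> h {..<n} p)"
    by (rule sum.cong) (auto simp: cw_def wt_prod cycles_of_orbit)
  also have "\<dots> = Gf \<sigma> n h" using count_perms[of "{..<n}" \<sigma> h] by simp
  finally show ?thesis .
qed

lemma Gf_sum_form: "Gf f n h = (\<Sum>p\<in>{p. p permutes {..<n}}. (\<Prod>C \<in> orbit p ` {..<n}. f (card C)) * h (card (orbit p ` {..<n})))"
  using count_perms[of "{..<n}" f h] by (simp add: cw_def)

lemma Gf_add: "Gf f n (\<lambda>j. h1 j + h2 j) = Gf f n h1 + Gf f n h2"
  unfolding Gf_sum_form by (simp add: distrib_left sum.distrib)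

lemma Gf_cmult: "Gf f n (\<lambda>j. c * h j) = c * Gf f n h"
  unfolding Gf_sum_form by (simp add: sum_distrib_left mult_ac)

lemma Gf_cong: "(\<And>j. h1 j = h2 j) \<Longrightarrow> Gf f n h1 = Gf f n h2"
  by (metis ext)

lemma nn_integral_perm_space:
  fixes F :: "nat \<times> (nat \<Rightarrow> nat) \<Rightarrow> ennreal"
  shows "(\<integral>\<^sup>+y. F y \<partial>count_space perm_space) = (\<Sum>n. \<Sum>p\<in>{p. p permutes {..<n}}. F (n, p))"
proof -
  define P where "P n = {n} \<times> {p. p permutes {..<n}}" for n :: nat
  have fin: "finite (P n)" for n unfolding P_def by (intro finite_cartesian_product finite_permutations) auto
  have 1: "(\<integral>\<^sup>+y. F y \<partial>count_space perm_space) = (\<integral>\<^sup>+y. F y * indicator perm_space y \<partial>count_space UNIV)"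
    by (rule nn_integral_count_space_indicator) (simp add: NO_MATCH_def)
  have 2: "F y * indicator perm_space y = (\<Sum>n. F y * indicator (P n) y)" for y
  proof -
    obtain m q where y: "y = (m, q)" by (cases y)
    have "(\<Sum>n. F y * indicator (P n) y) = (\<Sum>n\<in>{m}. F y * indicator (P n) y)"
      by (rule suminf_finite) (auto simp: P_def y)
    also have "\<dots> = F y * indicator perm_space y"
      by (simp add: P_def perm_space_def y indicator_def)
    finally show ?thesis ..
  qed
  have "(\<integral>\<^sup>+y. F y * indicator perm_space y \<partial>count_space UNIV) =
      (\<integral>\<^sup>+y. (\<Sum>n. F y * indicator (P n) y) \<partial>count_space UNIV)"
    by (simp add: 2)
  also have "\<dots> = (\<Sum>n. \<integral>\<^sup>+y. F y * indicator (P n) y \<partial>count_space UNIV)"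
    by (rule nn_integral_suminf) simp
  also have "\<dots> = (\<Sum>n. \<Sum>p\<in>{p. p permutes {..<n}}. F (n, p))"
  proof (rule suminf_cong)
    fix n
    have "(\<integral>\<^sup>+y. F y * indicator (P n) y \<partial>count_space UNIV) = (\<integral>\<^sup>+y. F y \<partial>count_space (P n))"
      by (rule nn_integral_count_space_indicator[symmetric]) (simp add: NO_MATCH_def)
    also have "\<dots> = (\<Sum>y\<in>P n. F y)" by (rule nn_integral_count_space_finite[OF fin])
    also have "\<dots> = (\<Sum>p\<in>{p. p permutes {..<n}}. F (n, p))"
    proof -
      have "P n = Pair n ` {p. p permutes {..<n}}" unfolding P_def by auto
      thus ?thesis by (simp add: sum.reindex inj_on_def)
    qed
    finally show "(\<integral>\<^sup>+y. F y * indicator (P n) y \<partial>count_space UNIV) = (\<Sum>p\<in>{p. p permutes {..<n}}. F (n, p))" .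
  qed
  finally show ?thesis using 1 by simp
qed

lemma wt_nonneg:
  assumes "\<forall>k\<ge>1. \<sigma> k \<ge> 0"
  shows "wt \<sigma> np \<ge> 0"
  unfolding wt_def using assms by (intro prod_nonneg) auto

lemma boltz_integral:
  assumes x: "0 < x" and \<sigma>: "\<forall>k\<ge>1. \<sigma> k \<ge> 0" and Y: "\<And>y. 0 \<le> Y y"
    and sm: "(\<lambda>n. \<Sum>p\<in>{p. p permutes {..<n}}. wt \<sigma> (n, p) * x ^ n / fact n * Y (n, p)) sums L"
  shows "integrable (boltzmann \<sigma> x) Y" "integral\<^sup>L (boltzmann \<sigma> x) Y = L / bnorm \<sigma> x"
proof -
  define V where "V n = (\<Sum>p\<in>{p. p permutes {..<n}}. wt \<sigma> (n, p) * x ^ n / fact n * Y (n, p))" for n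
  have bpos: "bnorm \<sigma> x > 0" unfolding bnorm_def by simp
  have g0: "0 \<le> wt \<sigma> np * x ^ fst np / fact (fst np) / bnorm \<sigma> x" for np
    using wt_nonneg[OF \<sigma>] x bpos by simp
  have V0: "0 \<le> V n" for n unfolding V_def using wt_nonneg[OF \<sigma>] x Y by (intro sum_nonneg) simp
  have meas: "Y \<in> borel_measurable (boltzmann \<sigma> x)"
    unfolding boltzmann_def by (subst measurable_cong_sets[OF sets_density refl]) simp
  have "(\<integral>\<^sup>+y. ennreal (Y y) \<partial>boltzmann \<sigma> x) =
      (\<integral>\<^sup>+y. ennreal (wt \<sigma> y * x ^ fst y / fact (fst y) / bnorm \<sigma> x) * ennreal (Y y) \<partial>count_space perm_space)"
    unfolding boltzmann_def by (rule nn_integral_density) simp_all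
  also have "\<dots> = (\<integral>\<^sup>+y. ennreal (wt \<sigma> y * x ^ fst y / fact (fst y) / bnorm \<sigma> x * Y y) \<partial>count_space perm_space)"
    by (rule nn_integral_cong) (rule ennreal_mult[OF g0 Y, symmetric])
  also have "\<dots> = (\<Sum>n. \<Sum>p\<in>{p. p permutes {..<n}}. ennreal (wt \<sigma> (n, p) * x ^ n / fact n / bnorm \<sigma> x * Y (n, p)))"
    by (subst nn_integral_perm_space) simp
  also have "\<dots> = (\<Sum>n. ennreal (V n / bnorm \<sigma> x))"
  proof (rule suminf_cong)
    fix n
    have "(\<Sum>p\<in>{p. p permutes {..<n}}. ennreal (wt \<sigma> (n, p) * x ^ n / fact n / bnorm \<sigma> x * Y (n, p)))
        = ennreal (\<Sum>p\<in>{p. p permutes {..<n}}. wt \<sigma> (n, p) * x ^ n / fact n / bnorm \<sigma> x * Y (n, p))"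
      using g0 Y by (intro sum_ennreal) (metis fst_conv mult_nonneg_nonneg)
    also have "(\<Sum>p\<in>{p. p permutes {..<n}}. wt \<sigma> (n, p) * x ^ n / fact n / bnorm \<sigma> x * Y (n, p)) = V n / bnorm \<sigma> x"
      unfolding V_def by (simp add: sum_divide_distrib)
    finally show "(\<Sum>p\<in>{p. p permutes {..<n}}. ennreal (wt \<sigma> (n, p) * x ^ n / fact n / bnorm \<sigma> x * Y (n, p)))
        = ennreal (V n / bnorm \<sigma> x)" .
  qed
  also have "\<dots> = ennreal (L / bnorm \<sigma> x)"
  proof -
    have s: "(\<lambda>n. V n / bnorm \<sigma> x) sums (L / bnorm \<sigma> x)" using sums_divide[OF sm] unfolding V_def .
    have "(\<Sum>n. ennreal (V n / bnorm \<sigma> x)) = ennreal (\<Sum>n. V n / bnorm \<sigma> x)"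
      by (rule suminf_ennreal2[OF _ sums_summable[OF s]]) (use V0 bpos in simp)
    also have "(\<Sum>n. V n / bnorm \<sigma> x) = L / bnorm \<sigma> x" by (rule sums_unique[OF s, symmetric])
    finally show ?thesis .
  qed
  finally have nn: "(\<integral>\<^sup>+y. ennreal (Y y) \<partial>boltzmann \<sigma> x) = ennreal (L / bnorm \<sigma> x)" .
  have L0: "0 \<le> L / bnorm \<sigma> x" using sums_le[OF _ sums_zero sm] V0 bpos unfolding V_def by simp
  have "integrable (boltzmann \<sigma> x) Y \<and> integral\<^sup>L (boltzmann \<sigma> x) Y = L / bnorm \<sigma> x"
    using nn_integral_eq_integrable[OF meas _ L0] nn Y by simp
  thus "integrable (boltzmann \<sigma> x) Y" "integral\<^sup>L (boltzmann \<sigma> x) Y = L / bnorm \<sigma> x" by auto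
qed


definition PS :: "(nat \<Rightarrow> real) \<Rightarrow> real \<Rightarrow> real" where "PS c y = (\<Sum>n. c n * y ^ n)"

definition pg :: "(nat \<Rightarrow> real) \<Rightarrow> bool" where
  "pg c \<longleftrightarrow> (\<forall>n. 0 \<le> c n) \<and> (\<forall>r. 0 \<le> r \<and> r < 1 \<longrightarrow> summable (\<lambda>n. c n * r ^ n))"

lemma pg_nonneg: "pg c \<Longrightarrow> 0 \<le> c n" unfolding pg_def by auto

lemma pg_abs: assumes "pg c" "\<bar>y\<bar> < 1" shows "summable (\<lambda>n. norm (c n * y ^ n))"
proof -
  have "summable (\<lambda>n. c n * \<bar>y\<bar> ^ n)" using assms unfolding pg_def by auto
  moreover have "norm (c n * y ^ n) = c n * \<bar>y\<bar> ^ n" for n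
    using pg_nonneg[OF assms(1)] by (simp add: abs_mult power_abs)
  ultimately show ?thesis by simp
qed

lemma pg_summable: "pg c \<Longrightarrow> \<bar>y\<bar> < 1 \<Longrightarrow> summable (\<lambda>n. c n * y ^ n)"
  by (rule summable_norm_cancel[OF pg_abs])

lemma pg_add: "pg c \<Longrightarrow> pg d \<Longrightarrow> pg (\<lambda>n. c n + d n)"
  unfolding pg_def by (auto simp: distrib_right intro: summable_add)

lemma pg_cmult: "0 \<le> a \<Longrightarrow> pg c \<Longrightarrow> pg (\<lambda>n. a * c n)"
  unfolding pg_def by (auto simp: mult.assoc intro: summable_mult)

lemma pg_zero: "pg (\<lambda>n. 0)" unfolding pg_def by simp

lemma PS_add: "pg c \<Longrightarrow> pg d \<Longrightarrow> \<bar>y\<bar> < 1 \<Longrightarrow> PS (\<lambda>n. c n + d n) y = PS c y + PS d y"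
  unfolding PS_def by (simp add: distrib_right suminf_add pg_summable)

lemma PS_cmult: "pg c \<Longrightarrow> \<bar>y\<bar> < 1 \<Longrightarrow> PS (\<lambda>n. a * c n) y = a * PS c y"
  unfolding PS_def by (simp add: mult.assoc suminf_mult pg_summable)

lemma PS_0: "PS c 0 = c 0"
  unfolding PS_def using powser_zero[of c] by simp

lemma DERIV_PS: assumes "pg c" "\<bar>y\<bar> < 1" shows "DERIV (PS c) y :> PS (diffs c) y"
  unfolding PS_def
  by (rule termdiffs_strong'[of 1]) (use assms pg_summable in auto)

definition Hs :: "(nat \<Rightarrow> real) \<Rightarrow> bool" where
  "Hs \<sigma> \<longleftrightarrow> (\<forall>k\<ge>1. 0 \<le> \<sigma> k) \<and> pg (\<lambda>k. \<sigma> (Suc k))"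

definition sf where "sf \<sigma> y = PS (\<lambda>k. \<sigma> (Suc k)) y"
definition Sc :: "(nat \<Rightarrow> real) \<Rightarrow> nat \<Rightarrow> real" where "Sc \<sigma> n = (if n = 0 then 0 else \<sigma> n / real n)"
definition Sfun where "Sfun \<sigma> y = PS (Sc \<sigma>) y"
definition Tc :: "(nat \<Rightarrow> real) \<Rightarrow> nat \<Rightarrow> real" where "Tc \<sigma> n = (if n = 0 then 0 else \<sigma> n)"
definition Tfun where "Tfun \<sigma> y = PS (Tc \<sigma>) y"

lemma pg_shift:
  assumes "\<And>n. 0 \<le> c n" "pg (\<lambda>k. d (Suc k))" "c 0 = 0" "\<And>k. c (Suc k) \<le> d (Suc k)"
  shows "pg c"
  unfolding pg_def
proof (intro conjI allI impI)
  fix r :: real assume r: "0 \<le> r \<and> r < 1"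
  have "summable (\<lambda>k. d (Suc k) * r ^ k)" using assms(2) r unfolding pg_def by auto
  moreover have "norm (c (Suc k) * r ^ Suc k) \<le> d (Suc k) * r ^ k" for k
  proof -
    have "c (Suc k) * r ^ Suc k = (c (Suc k) * r ^ k) * r" by simp
    also have "\<dots> \<le> c (Suc k) * r ^ k" using r assms(1)[of "Suc k"]
      by (intro mult_left_le) auto
    also have "\<dots> \<le> d (Suc k) * r ^ k" using r assms(4)[of k] by (intro mult_right_mono) auto
    finally show ?thesis using r assms(1)[of "Suc k"] by simp
  qed
  ultimately have "summable (\<lambda>k. c (Suc k) * r ^ Suc k)"
    by (intro summable_comparison_test[of "\<lambda>k. c (Suc k) * r ^ Suc k"]) auto
  thus "summable (\<lambda>n. c n * r ^ n)" by (subst summable_Suc_iff[symmetric])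
qed (use assms in auto)

lemma pg_Sc: "Hs \<sigma> \<Longrightarrow> pg (Sc \<sigma>)"
proof (rule pg_shift[where d = \<sigma>])
  assume H: "Hs \<sigma>"
  show "pg (\<lambda>k. \<sigma> (Suc k))" using H unfolding Hs_def by auto
  fix n show "0 \<le> Sc \<sigma> n" using H unfolding Hs_def Sc_def by auto
  fix k
  have h: "0 \<le> \<sigma> (Suc k)" using H unfolding Hs_def by auto
  have "\<sigma> (Suc k) * 1 \<le> \<sigma> (Suc k) * (1 + real k)" by (rule mult_left_mono) (use h in auto)
  then show "Sc \<sigma> (Suc k) \<le> \<sigma> (Suc k)" unfolding Sc_def
    by (simp add: divide_le_eq)
qed (simp add: Sc_def)

lemma pg_Tc: "Hs \<sigma> \<Longrightarrow> pg (Tc \<sigma>)"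
proof (rule pg_shift[where d = \<sigma>])
  assume H: "Hs \<sigma>"
  show "pg (\<lambda>k. \<sigma> (Suc k))" using H unfolding Hs_def by auto
  fix n show "0 \<le> Tc \<sigma> n" using H unfolding Hs_def Tc_def by auto
qed (simp_all add: Tc_def)

lemma diffs_Sc: "diffs (Sc \<sigma>) = (\<lambda>k. \<sigma> (Suc k))"
  by (rule ext) (simp add: diffs_def Sc_def del: of_nat_Suc)

lemma DERIV_Sfun: "Hs \<sigma> \<Longrightarrow> \<bar>y\<bar> < 1 \<Longrightarrow> DERIV (Sfun \<sigma>) y :> sf \<sigma> y"
  unfolding Sfun_def sf_def using DERIV_PS[OF pg_Sc] diffs_Sc by metis

lemma PS_diffs_conv:
  assumes H: "Hs \<sigma>" and d: "pg d" and y: "\<bar>y\<bar> < 1"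
    and rec: "\<And>n. real (Suc n) * c (Suc n) = (\<Sum>k\<le>n. \<sigma> (Suc k) * d (n - k))"
  shows "PS (diffs c) y = sf \<sigma> y * PS d y"
proof -
  have s: "pg (\<lambda>k. \<sigma> (Suc k))" using H unfolding Hs_def by auto
  have "sf \<sigma> y * PS d y = (\<Sum>n. \<Sum>k\<le>n. (\<sigma> (Suc k) * y ^ k) * (d (n - k) * y ^ (n - k)))"
    unfolding sf_def PS_def using Cauchy_product[OF pg_abs[OF s y] pg_abs[OF d y]] by (simp only:)
  also have "\<dots> = (\<Sum>n. diffs c n * y ^ n)"
  proof (rule suminf_cong)
    fix n
    have "(\<Sum>k\<le>n. (\<sigma> (Suc k) * y ^ k) * (d (n - k) * y ^ (n - k))) = (\<Sum>k\<le>n. \<sigma> (Suc k) * d (n - k) * y ^ n)"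
    proof (rule sum.cong[OF refl])
      fix k assume "k \<in> {..n}"
      hence ee: "y ^ n = y ^ k * y ^ (n - k)" by (simp add: power_add[symmetric])
      show "(\<sigma> (Suc k) * y ^ k) * (d (n - k) * y ^ (n - k)) = \<sigma> (Suc k) * d (n - k) * y ^ n"
        unfolding ee by (simp only: mult_ac)
    qed
    also have "\<dots> = diffs c n * y ^ n"
      unfolding diffs_def using rec[of n] by (simp add: sum_distrib_right[symmetric])
    finally show "(\<Sum>k\<le>n. (\<sigma> (Suc k) * y ^ k) * (d (n - k) * y ^ (n - k))) = diffs c n * y ^ n" .
  qed
  finally show ?thesis unfolding PS_def by simp
qed

lemma DER:
  assumes H: "Hs \<sigma>" and c: "pg c" and d: "pg d" and y: "\<bar>y\<bar> < 1"
    and rec: "\<And>n. real (Suc n) * c (Suc n) = (\<Sum>k\<le>n. \<sigma> (Suc k) * d (n - k))"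
  shows "DERIV (PS c) y :> sf \<sigma> y * PS d y"
  using DERIV_PS[OF c y] unfolding PS_diffs_conv[OF H d y rec] .

lemma BOUND:
  assumes H: "Hs \<sigma>" and c0: "\<And>n. 0 \<le> c n" and e: "pg e"
    and rec: "\<And>n. real (Suc n) * c (Suc n) = (\<Sum>k\<le>n. \<sigma> (Suc k) * (c (n - k) + e (n - k)))"
  shows "pg c"
  unfolding pg_def
proof (intro conjI allI impI)
  fix n show "0 \<le> c n" by (rule c0)
next
  fix r :: real assume r: "0 \<le> r \<and> r < 1"
  define \<rho> where "\<rho> = (1 + r) / 2"
  have \<rho>: "0 < \<rho>" "\<rho> < 1" "r < \<rho>" using r by (auto simp: \<rho>_def)
  have sp: "pg (\<lambda>k. \<sigma> (Suc k))" and sn: "\<And>k. 0 \<le> \<sigma> (Suc k)" using H unfolding Hs_def by auto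
  have es: "summable (\<lambda>n. e n * \<rho> ^ n)" using e \<rho> unfolding pg_def by auto
  have ss: "summable (\<lambda>k. \<sigma> (Suc k) * \<rho> ^ k)" using sp \<rho> unfolding pg_def by auto
  define B where "B = (\<Sum>n. e n * \<rho> ^ n)"
  define M where "M = \<rho> * (\<Sum>k. \<sigma> (Suc k) * \<rho> ^ k)"
  have eB: "e n * \<rho> ^ n \<le> B" for n
    unfolding B_def using sum_le_suminf[OF es, of "{n}"] pg_nonneg[OF e] \<rho> by simp
  have B0: "0 \<le> B" using eB[of 0] pg_nonneg[OF e, of 0] by simp
  have sM: "(\<Sum>k\<le>m. \<sigma> (Suc k) * \<rho> ^ Suc k) \<le> M" for m
  proof -
    have "(\<Sum>k\<le>m. \<sigma> (Suc k) * \<rho> ^ k) \<le> (\<Sum>k. \<sigma> (Suc k) * \<rho> ^ k)"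
      using sum_le_suminf[OF ss, of "{..m}"] sn \<rho> by simp
    hence "\<rho> * (\<Sum>k\<le>m. \<sigma> (Suc k) * \<rho> ^ k) \<le> M" unfolding M_def using \<rho> by simp
    thus ?thesis by (simp add: sum_distrib_left mult_ac)
  qed
  define N0 where "N0 = nat \<lceil>2 * M\<rceil>"
  define A where "A = max B (Max ((\<lambda>n. c n * \<rho> ^ n) ` {..N0}))"
  have A0: "0 \<le> A" using B0 unfolding A_def by simp
  have bnd: "c n * \<rho> ^ n \<le> A" for n
  proof (induction n rule: less_induct)
    case (less n)
    show ?case
    proof (cases "n \<le> N0")
      case True
      hence "c n * \<rho> ^ n \<le> Max ((\<lambda>n. c n * \<rho> ^ n) ` {..N0})" by (intro Max_ge) auto
      thus ?thesis unfolding A_def by simp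
    next
      case False
      then obtain m where m: "n = Suc m" by (cases n) auto
      have big: "2 * M \<le> real (Suc m)" using False m unfolding N0_def by linarith
      have "real (Suc m) * (c (Suc m) * \<rho> ^ Suc m) = (\<Sum>k\<le>m. \<sigma> (Suc k) * (c (m - k) + e (m - k))) * \<rho> ^ Suc m"
        using rec[of m] by (simp add: mult.assoc)
      also have "\<dots> = (\<Sum>k\<le>m. (\<sigma> (Suc k) * \<rho> ^ Suc k) * (c (m - k) * \<rho> ^ (m - k) + e (m - k) * \<rho> ^ (m - k)))"
        unfolding sum_distrib_right
      proof (rule sum.cong[OF refl])
        fix k assume "k \<in> {..m}"
        hence ee: "\<rho> ^ Suc m = \<rho> ^ Suc k * \<rho> ^ (m - k)" by (simp add: power_add[symmetric])
        show "\<sigma> (Suc k) * (c (m - k) + e (m - k)) * \<rho> ^ Suc m =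
          (\<sigma> (Suc k) * \<rho> ^ Suc k) * (c (m - k) * \<rho> ^ (m - k) + e (m - k) * \<rho> ^ (m - k))"
          unfolding ee by (simp only: algebra_simps)
      qed
      also have "\<dots> \<le> (\<Sum>k\<le>m. (\<sigma> (Suc k) * \<rho> ^ Suc k) * (2 * A))"
      proof (rule sum_mono)
        fix k assume k: "k \<in> {..m}"
        have "c (m - k) * \<rho> ^ (m - k) \<le> A" using less[of "m - k"] m by simp
        moreover have "e (m - k) * \<rho> ^ (m - k) \<le> A" using eB[of "m - k"] unfolding A_def by simp
        ultimately show "(\<sigma> (Suc k) * \<rho> ^ Suc k) * (c (m - k) * \<rho> ^ (m - k) + e (m - k) * \<rho> ^ (m - k))
            \<le> (\<sigma> (Suc k) * \<rho> ^ Suc k) * (2 * A)"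
          using sn[of k] \<rho> by (intro mult_left_mono) auto
      qed
      also have "\<dots> = (\<Sum>k\<le>m. \<sigma> (Suc k) * \<rho> ^ Suc k) * (2 * A)" by (simp add: sum_distrib_right)
      also have "\<dots> \<le> M * (2 * A)" using sM[of m] A0 by (intro mult_right_mono) auto
      also have "\<dots> \<le> real (Suc m) * A" using big A0 by (metis mult.assoc mult.commute mult_right_mono)
      finally have "real (Suc m) * (c (Suc m) * \<rho> ^ Suc m) \<le> real (Suc m) * A" .
      hence "c (Suc m) * \<rho> ^ Suc m \<le> A" by (simp del: of_nat_Suc)
      thus ?thesis using m by simp
    qed
  qed
  have q: "\<bar>r / \<rho>\<bar> < 1" using \<rho> r by (simp add: divide_less_eq)
  have gs: "summable (\<lambda>n. A * (r / \<rho>) ^ n)" using q by (intro summable_mult summable_geometric) simp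
  have le: "norm (c n * r ^ n) \<le> A * (r / \<rho>) ^ n" for n
  proof -
    have "c n * r ^ n = (c n * \<rho> ^ n) * (r / \<rho>) ^ n" using \<rho> by (simp add: power_divide)
    also have "\<dots> \<le> A * (r / \<rho>) ^ n" using bnd[of n] r \<rho> by (intro mult_right_mono) auto
    finally show ?thesis using c0[of n] r by simp
  qed
  show "summable (\<lambda>n. c n * r ^ n)"
    by (rule summable_comparison_test'[OF gs le])
qed


lemma const_on_ball:
  fixes F :: "real \<Rightarrow> real"
  assumes d: "\<And>y. \<bar>y\<bar> < 1 \<Longrightarrow> DERIV F y :> 0" and y: "\<bar>y\<bar> < 1"
  shows "F y = F 0"
proof -
  have cont: "continuous_on {a..b} F" if "-1 < a" "b < 1" for a b
  proof (intro continuous_at_imp_continuous_on ballI)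
    fix t assume "t \<in> {a..b}"
    hence "\<bar>t\<bar> < 1" using that by auto
    thus "isCont F t" using d DERIV_isCont by blast
  qed
  consider "0 < y" | "y = 0" | "y < 0" by linarith
  then show ?thesis
  proof cases
    case 1
    show ?thesis by (rule DERIV_isconst_end[OF 1 cont]) (use y d in auto)
  next
    case 3
    have "F 0 = F y" by (rule DERIV_isconst_end[OF 3 cont]) (use y d in auto)
    thus ?thesis by simp
  qed simp
qed

locale odesys =
  fixes \<sigma> :: "nat \<Rightarrow> real" and z a b :: "nat \<Rightarrow> real"
  assumes H: "Hs \<sigma>"
    and z0: "z 0 = 1" and a0: "a 0 = 0" and b0: "b 0 = 0"
    and zn: "\<And>n. 0 \<le> z n" and an: "\<And>n. 0 \<le> a n" and bn: "\<And>n. 0 \<le> b n"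
    and Rz: "\<And>n. real (Suc n) * z (Suc n) = (\<Sum>k\<le>n. \<sigma> (Suc k) * z (n - k))"
    and Ra: "\<And>n. real (Suc n) * a (Suc n) = (\<Sum>k\<le>n. \<sigma> (Suc k) * (z (n - k) + a (n - k)))"
    and Rb: "\<And>n. real (Suc n) * b (Suc n) = (\<Sum>k\<le>n. \<sigma> (Suc k) * (z (n - k) + 2 * a (n - k) + b (n - k)))"
begin

lemma pgz: "pg z"
  by (rule BOUND[OF H zn pg_zero]) (simp add: Rz del: of_nat_Suc)

lemma pga: "pg a"
  by (rule BOUND[OF H an pgz]) (simp add: Ra add.commute del: of_nat_Suc)

lemma pgb: "pg b"
proof (rule BOUND[OF H bn pg_add[OF pgz pg_cmult[OF _ pga]]])
  fix n show "real (Suc n) * b (Suc n) = (\<Sum>k\<le>n. \<sigma> (Suc k) * (b (n - k) + (z (n - k) + 2 * a (n - k))))"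
    by (simp add: Rb add_ac del: of_nat_Suc)
qed simp

lemma Zexp: assumes y: "\<bar>y\<bar> < 1" shows "PS z y = exp (Sfun \<sigma> y)"
proof -
  define F where "F y = PS z y * exp (- Sfun \<sigma> y)" for y
  have "DERIV F t :> 0" if t: "\<bar>t\<bar> < 1" for t
  proof -
    have dz: "DERIV (PS z) t :> sf \<sigma> t * PS z t" by (rule DER[OF H pgz pgz t Rz])
    have dS: "DERIV (Sfun \<sigma>) t :> sf \<sigma> t" by (rule DERIV_Sfun[OF H t])
    have "DERIV F t :> PS z t * (exp (- Sfun \<sigma> t) * (- sf \<sigma> t)) + (sf \<sigma> t * PS z t) * exp (- Sfun \<sigma> t)"
      unfolding F_def by (intro DERIV_mult' DERIV_fun_exp DERIV_minus dz dS)
    thus ?thesis by (simp add: algebra_simps)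
  qed
  hence "F y = F 0" using const_on_ball y by blast
  also have "F 0 = 1" unfolding F_def Sfun_def by (simp add: PS_0 z0 Sc_def)
  finally show ?thesis unfolding F_def by (simp add: exp_minus field_simps)
qed

lemma Aexp: assumes y: "\<bar>y\<bar> < 1" shows "PS a y = Sfun \<sigma> y * exp (Sfun \<sigma> y)"
proof -
  define F where "F y = PS a y * exp (- Sfun \<sigma> y) - Sfun \<sigma> y" for y
  have "DERIV F t :> 0" if t: "\<bar>t\<bar> < 1" for t
  proof -
    have da: "DERIV (PS a) t :> sf \<sigma> t * PS (\<lambda>n. z n + a n) t" by (rule DER[OF H pga pg_add[OF pgz pga] t Ra])
    have dS: "DERIV (Sfun \<sigma>) t :> sf \<sigma> t" by (rule DERIV_Sfun[OF H t])
    have "DERIV F t :> PS a t * (exp (- Sfun \<sigma> t) * (- sf \<sigma> t)) + (sf \<sigma> t * PS (\<lambda>n. z n + a n) t) * exp (- Sfun \<sigma> t) - sf \<sigma> t"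
      unfolding F_def by (intro DERIV_diff DERIV_mult' DERIV_fun_exp DERIV_minus da dS)
    moreover have "PS (\<lambda>n. z n + a n) t = exp (Sfun \<sigma> t) + PS a t"
      using PS_add[OF pgz pga t] Zexp[OF t] by simp
    moreover have "exp (Sfun \<sigma> t) * exp (- Sfun \<sigma> t) = 1" by (simp add: exp_minus)
    ultimately show ?thesis by (simp add: algebra_simps)
  qed
  hence "F y = F 0" using const_on_ball y by blast
  also have "F 0 = 0" unfolding F_def Sfun_def by (simp add: PS_0 a0 Sc_def)
  finally show ?thesis unfolding F_def by (simp add: exp_minus field_simps)
qed

lemma Bexp: assumes y: "\<bar>y\<bar> < 1" shows "PS b y = (Sfun \<sigma> y + Sfun \<sigma> y * Sfun \<sigma> y) * exp (Sfun \<sigma> y)"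
proof -
  define F where "F y = PS b y * exp (- Sfun \<sigma> y) - Sfun \<sigma> y - Sfun \<sigma> y * Sfun \<sigma> y" for y
  have pgd: "pg (\<lambda>n. z n + 2 * a n + b n)" by (intro pg_add pgz pg_cmult pga pgb) simp
  have "DERIV F t :> 0" if t: "\<bar>t\<bar> < 1" for t
  proof -
    have db: "DERIV (PS b) t :> sf \<sigma> t * PS (\<lambda>n. z n + 2 * a n + b n) t" by (rule DER[OF H pgb pgd t Rb])
    have dS: "DERIV (Sfun \<sigma>) t :> sf \<sigma> t" by (rule DERIV_Sfun[OF H t])
    have "DERIV F t :> PS b t * (exp (- Sfun \<sigma> t) * (- sf \<sigma> t)) + (sf \<sigma> t * PS (\<lambda>n. z n + 2 * a n + b n) t) * exp (- Sfun \<sigma> t)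
        - sf \<sigma> t - (Sfun \<sigma> t * sf \<sigma> t + sf \<sigma> t * Sfun \<sigma> t)"
      unfolding F_def by (intro DERIV_diff DERIV_mult' DERIV_fun_exp DERIV_minus db dS)
    moreover have "PS (\<lambda>n. z n + 2 * a n + b n) t = exp (Sfun \<sigma> t) + 2 * (Sfun \<sigma> t * exp (Sfun \<sigma> t)) + PS b t"
    proof -
      have "PS (\<lambda>n. z n + 2 * a n + b n) t = PS (\<lambda>n. z n + 2 * a n) t + PS b t"
        by (rule PS_add[OF pg_add[OF pgz pg_cmult[OF _ pga]] pgb t]) simp
      also have "PS (\<lambda>n. z n + 2 * a n) t = PS z t + 2 * PS a t"
        using PS_add[OF pgz pg_cmult[OF _ pga] t] PS_cmult[OF pga t, of 2] by simp
      finally show ?thesis using Zexp[OF t] Aexp[OF t] by simp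
    qed
    moreover have "exp (Sfun \<sigma> t) * exp (- Sfun \<sigma> t) = 1" by (simp add: exp_minus)
    ultimately show ?thesis by (simp add: algebra_simps)
  qed
  hence "F y = F 0" using const_on_ball y by blast
  also have "F 0 = 0" unfolding F_def Sfun_def by (simp add: PS_0 b0 Sc_def)
  finally show ?thesis unfolding F_def by (simp add: exp_minus field_simps)
qed

lemma Tfun_eq: assumes y: "\<bar>y\<bar> < 1" shows "Tfun \<sigma> y = y * sf \<sigma> y"
proof -
  have s: "pg (\<lambda>k. \<sigma> (Suc k))" using H unfolding Hs_def by auto
  have "(\<lambda>n. \<sigma> (Suc n) * y ^ n) sums sf \<sigma> y" unfolding sf_def PS_def
    using pg_summable[OF s y] by (simp add: summable_sums)
  hence "(\<lambda>n. y * (\<sigma> (Suc n) * y ^ n)) sums (y * sf \<sigma> y)" by (rule sums_mult)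
  hence "(\<lambda>n. Tc \<sigma> (Suc n) * y ^ Suc n) sums (y * sf \<sigma> y)" by (simp add: Tc_def mult_ac)
  hence "(\<lambda>n. Tc \<sigma> n * y ^ n) sums (y * sf \<sigma> y + Tc \<sigma> 0 * y ^ 0)"
    by (subst sums_Suc_iff[symmetric])
  hence "(\<lambda>n. Tc \<sigma> n * y ^ n) sums (y * sf \<sigma> y)" by (simp add: Tc_def)
  thus ?thesis unfolding Tfun_def PS_def by (rule sums_unique[symmetric])
qed

lemma Nexp: assumes y: "\<bar>y\<bar> < 1" shows "(\<lambda>n. real n * z n * y ^ n) sums (Tfun \<sigma> y * exp (Sfun \<sigma> y))"
proof -
  have "summable (\<lambda>n. diffs z n * y ^ n)"
    by (rule termdiff_converges[where K=1]) (use y pgz pg_summable in auto)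
  hence "(\<lambda>n. diffs z n * y ^ n) sums PS (diffs z) y" unfolding PS_def by (simp add: summable_sums)
  hence "(\<lambda>n. diffs z n * y ^ n) sums (sf \<sigma> y * PS z y)" using PS_diffs_conv[OF H pgz y Rz] by simp
  hence "(\<lambda>n. y * (diffs z n * y ^ n)) sums (y * (sf \<sigma> y * PS z y))" by (rule sums_mult)
  hence "(\<lambda>n. real (Suc n) * z (Suc n) * y ^ Suc n) sums (y * (sf \<sigma> y * PS z y))"
    by (simp add: diffs_def mult_ac del: of_nat_Suc)
  hence "(\<lambda>n. real n * z n * y ^ n) sums (y * (sf \<sigma> y * PS z y) + real 0 * z 0 * y ^ 0)"
    by (subst sums_Suc_iff[symmetric])
  thus ?thesis using Tfun_eq[OF y] Zexp[OF y] by (simp add: mult_ac)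
qed

end


lemma PS_sums: "pg c \<Longrightarrow> \<bar>y\<bar> < 1 \<Longrightarrow> (\<lambda>n. c n * y ^ n) sums PS c y"
  unfolding PS_def by (rule summable_sums[OF pg_summable])

lemma Gf_nonneg:
  assumes f: "\<forall>k\<ge>1. 0 \<le> f k" and h: "\<forall>j. 0 \<le> h j"
  shows "0 \<le> Gf f n h"
  using h
proof (induction n arbitrary: h rule: less_induct)
  case (less n)
  show ?case
  proof (cases n)
    case 0 then show ?thesis using less.prems by simp
  next
    case (Suc m)
    have "0 \<le> (\<Sum>k\<le>m. fact m / fact (m - k) * f (Suc k) * Gf f (m - k) (h \<circ> Suc))"
    proof (intro sum_nonneg mult_nonneg_nonneg)
      fix k assume "k \<in> {..m}"
      show "0 \<le> (fact m / fact (m - k) :: real)" by (intro divide_nonneg_nonneg fact_ge_zero)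
      show "0 \<le> f (Suc k)" using f by simp
      show "0 \<le> Gf f (m - k) (h \<circ> Suc)" using less.IH[of "m - k" "h \<circ> Suc"] less.prems Suc by (simp add: comp_def)
    qed
    thus ?thesis using Suc by simp
  qed
qed

lemma Gf_rec:
  "real (Suc n) * (Gf f (Suc n) h / fact (Suc n)) = (\<Sum>k\<le>n. f (Suc k) * (Gf f (n - k) (h \<circ> Suc) / fact (n - k)))"
proof -
  have "real (Suc n) * (Gf f (Suc n) h / fact (Suc n)) = Gf f (Suc n) h / fact n"
    by (simp add: field_simps del: of_nat_Suc)
  also have "\<dots> = (\<Sum>k\<le>n. fact n / fact (n - k) * f (Suc k) * Gf f (n - k) (h \<circ> Suc) / fact n)"
    by (simp add: sum_divide_distrib)
  also have "\<dots> = (\<Sum>k\<le>n. f (Suc k) * (Gf f (n - k) (h \<circ> Suc) / fact (n - k)))"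
    by (rule sum.cong) (simp_all add: field_simps)
  finally show ?thesis .
qed

definition zs where "zs \<sigma> n = Gf \<sigma> n (\<lambda>_. 1) / fact n"
definition as where "as \<sigma> n = Gf \<sigma> n (\<lambda>j. real j) / fact n"
definition bs where "bs \<sigma> n = Gf \<sigma> n (\<lambda>j. real j ^ 2) / fact n"

lemma odesys_inst:
  assumes H: "Hs \<sigma>"
  shows "odesys \<sigma> (zs \<sigma>) (as \<sigma>) (bs \<sigma>)"
proof
  have f: "\<forall>k\<ge>1. 0 \<le> \<sigma> k" using H unfolding Hs_def by auto
  show "Hs \<sigma>" by (rule H)
  show "zs \<sigma> 0 = 1" "as \<sigma> 0 = 0" "bs \<sigma> 0 = 0" by (simp_all add: zs_def as_def bs_def)
  fix n
  show "0 \<le> zs \<sigma> n" "0 \<le> as \<sigma> n" "0 \<le> bs \<sigma> n"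
    unfolding zs_def as_def bs_def by (intro divide_nonneg_pos Gf_nonneg[OF f]; simp)+
  show "real (Suc n) * zs \<sigma> (Suc n) = (\<Sum>k\<le>n. \<sigma> (Suc k) * zs \<sigma> (n - k))"
    unfolding zs_def Gf_rec by (simp add: comp_def)
  have e1: "Gf \<sigma> m ((\<lambda>j. real j) \<circ> Suc) = Gf \<sigma> m (\<lambda>_. 1) + Gf \<sigma> m (\<lambda>j. real j)" for m
    using Gf_add[of \<sigma> m "\<lambda>_. 1" "\<lambda>j. real j"] by (simp add: comp_def)
  show "real (Suc n) * as \<sigma> (Suc n) = (\<Sum>k\<le>n. \<sigma> (Suc k) * (zs \<sigma> (n - k) + as \<sigma> (n - k)))"
    unfolding as_def zs_def Gf_rec e1 by (simp add: add_divide_distrib)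
  have e2: "Gf \<sigma> m ((\<lambda>j. real j ^ 2) \<circ> Suc) = Gf \<sigma> m (\<lambda>_. 1) + 2 * Gf \<sigma> m (\<lambda>j. real j) + Gf \<sigma> m (\<lambda>j. real j ^ 2)" for m
  proof -
    have "Gf \<sigma> m ((\<lambda>j. real j ^ 2) \<circ> Suc) = Gf \<sigma> m (\<lambda>j. (1 + 2 * real j) + real j ^ 2)"
      by (rule Gf_cong) (simp add: power2_eq_square algebra_simps)
    also have "\<dots> = Gf \<sigma> m (\<lambda>j. 1 + 2 * real j) + Gf \<sigma> m (\<lambda>j. real j ^ 2)" by (rule Gf_add)
    also have "Gf \<sigma> m (\<lambda>j. 1 + 2 * real j) = Gf \<sigma> m (\<lambda>_. 1) + Gf \<sigma> m (\<lambda>j. 2 * real j)" by (rule Gf_add)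
    also have "Gf \<sigma> m (\<lambda>j. 2 * real j) = 2 * Gf \<sigma> m (\<lambda>j. real j)" by (rule Gf_cmult)
    finally show ?thesis .
  qed
  show "real (Suc n) * bs \<sigma> (Suc n) = (\<Sum>k\<le>n. \<sigma> (Suc k) * (zs \<sigma> (n - k) + 2 * as \<sigma> (n - k) + bs \<sigma> (n - k)))"
    unfolding bs_def as_def zs_def Gf_rec e2 by (simp add: add_divide_distrib)
qed

lemma bnorm_Sfun:
  assumes H: "Hs \<sigma>" and x: "\<bar>x\<bar> < 1"
  shows "bnorm \<sigma> x = exp (Sfun \<sigma> x)"
proof -
  have "(\<lambda>n. Sc \<sigma> n * x ^ n) sums Sfun \<sigma> x" unfolding Sfun_def PS_def
    using pg_summable[OF pg_Sc[OF H] x] by (simp add: summable_sums)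
  hence "(\<lambda>n. Sc \<sigma> (Suc n) * x ^ Suc n) sums (Sfun \<sigma> x - Sc \<sigma> 0 * x ^ 0)"
    by (subst sums_Suc_iff) simp
  hence "(\<lambda>k. \<sigma> (Suc k) * x ^ Suc k / real (Suc k)) sums Sfun \<sigma> x"
    by (simp add: Sc_def del: of_nat_Suc)
  thus ?thesis unfolding bnorm_def by (simp add: sums_unique[symmetric])
qed

lemma per_n:
  "(\<Sum>p\<in>{p. p permutes {..<n}}. wt \<sigma> (n, p) * x ^ n / fact n * (c n * h (card (cycles_of n p))))
    = c n * x ^ n / fact n * Gf \<sigma> n h"
proof -
  have "(\<Sum>p\<in>{p. p permutes {..<n}}. wt \<sigma> (n, p) * x ^ n / fact n * (c n * h (card (cycles_of n p))))
     = c n * x ^ n / fact n * (\<Sum>p\<in>{p. p permutes {..<n}}. wt \<sigma> (n, p) * h (card (cycles_of n p)))"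
    by (simp add: sum_distrib_left mult_ac)
  thus ?thesis by (simp add: sum_wt_Gf)
qed

lemma main_values:
  assumes H: "Hs \<sigma>" and x: "0 < x" "x < 1"
  shows "bexp \<sigma> x ncycles = Sfun \<sigma> x" "bvar \<sigma> x ncycles = Sfun \<sigma> x" "bexp \<sigma> x gsize = Tfun \<sigma> x"
proof -
  interpret odesys \<sigma> "zs \<sigma>" "as \<sigma>" "bs \<sigma>" by (rule odesys_inst[OF H])
  have ax: "\<bar>x\<bar> < 1" using x by simp
  have \<sigma>: "\<forall>k\<ge>1. 0 \<le> \<sigma> k" using H unfolding Hs_def by auto
  have bn: "bnorm \<sigma> x = exp (Sfun \<sigma> x)" by (rule bnorm_Sfun[OF H ax])
  let ?S = "Sfun \<sigma> x"
  have sA: "(\<lambda>n. as \<sigma> n * x ^ n) sums (?S * exp ?S)"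
    using PS_sums[OF pga ax] Aexp[OF ax] by simp
  have eX: "(\<lambda>n. \<Sum>p\<in>{p. p permutes {..<n}}. wt \<sigma> (n, p) * x ^ n / fact n * ncycles (n, p)) sums (?S * exp ?S)"
  proof -
    have "(\<Sum>p\<in>{p. p permutes {..<n}}. wt \<sigma> (n, p) * x ^ n / fact n * ncycles (n, p)) = as \<sigma> n * x ^ n" for n
      using per_n[of \<sigma> n x "\<lambda>_. 1" "\<lambda>j. real j"] by (simp add: ncycles_def as_def)
    thus ?thesis using sA by simp
  qed
  show E: "bexp \<sigma> x ncycles = ?S"
  proof -
    have nX: "\<And>y. 0 \<le> ncycles y" by (simp add: ncycles_def)
    show ?thesis unfolding bexp_def using boltz_integral(2)[OF x(1) \<sigma> nX eX] bn by simp
  qed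
  have eN: "(\<lambda>n. \<Sum>p\<in>{p. p permutes {..<n}}. wt \<sigma> (n, p) * x ^ n / fact n * gsize (n, p)) sums (Tfun \<sigma> x * exp ?S)"
  proof -
    have "(\<Sum>p\<in>{p. p permutes {..<n}}. wt \<sigma> (n, p) * x ^ n / fact n * gsize (n, p)) = real n * zs \<sigma> n * x ^ n" for n
      using per_n[of \<sigma> n x "\<lambda>n. real n" "\<lambda>_. 1"] by (simp add: gsize_def zs_def)
    thus ?thesis using Nexp[OF ax] by simp
  qed
  show "bexp \<sigma> x gsize = Tfun \<sigma> x"
  proof -
    have nN: "\<And>y. 0 \<le> gsize y" by (simp add: gsize_def)
    show ?thesis unfolding bexp_def using boltz_integral(2)[OF x(1) \<sigma> nN eN] bn by simp
  qed
  have sV: "(\<lambda>n. bs \<sigma> n * x ^ n + (- 2 * ?S) * (as \<sigma> n * x ^ n) + ?S ^ 2 * (zs \<sigma> n * x ^ n)) sums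
      ((?S + ?S * ?S) * exp ?S + (- 2 * ?S) * (?S * exp ?S) + ?S ^ 2 * exp ?S)"
  proof (intro sums_add sums_mult)
    show "(\<lambda>n. bs \<sigma> n * x ^ n) sums ((?S + ?S * ?S) * exp ?S)"
      using PS_sums[OF pgb ax] Bexp[OF ax] by simp
    show "(\<lambda>n. as \<sigma> n * x ^ n) sums (?S * exp ?S)" by (rule sA)
    show "(\<lambda>n. zs \<sigma> n * x ^ n) sums (exp ?S)"
      using PS_sums[OF pgz ax] Zexp[OF ax] by simp
  qed
  have eV: "(\<lambda>n. \<Sum>p\<in>{p. p permutes {..<n}}. wt \<sigma> (n, p) * x ^ n / fact n * (ncycles (n, p) - ?S)\<^sup>2) sums (?S * exp ?S)"
  proof -
    have "(\<Sum>p\<in>{p. p permutes {..<n}}. wt \<sigma> (n, p) * x ^ n / fact n * (ncycles (n, p) - ?S)\<^sup>2)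
        = bs \<sigma> n * x ^ n + (- 2 * ?S) * (as \<sigma> n * x ^ n) + ?S ^ 2 * (zs \<sigma> n * x ^ n)" for n
    proof -
      have "(\<Sum>p\<in>{p. p permutes {..<n}}. wt \<sigma> (n, p) * x ^ n / fact n * (ncycles (n, p) - ?S)\<^sup>2)
          = 1 * x ^ n / fact n * Gf \<sigma> n (\<lambda>j. (real j - ?S)\<^sup>2)"
        using per_n[of \<sigma> n x "\<lambda>_. 1" "\<lambda>j. (real j - ?S)\<^sup>2"] by (simp add: ncycles_def)
      also have "Gf \<sigma> n (\<lambda>j. (real j - ?S)\<^sup>2) = Gf \<sigma> n (\<lambda>j. (real j ^ 2 + (- 2 * ?S) * real j) + ?S ^ 2 * 1)"
        by (rule Gf_cong) (simp add: power2_eq_square algebra_simps)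
      also have "\<dots> = Gf \<sigma> n (\<lambda>j. real j ^ 2) + (- 2 * ?S) * Gf \<sigma> n (\<lambda>j. real j) + ?S ^ 2 * Gf \<sigma> n (\<lambda>_. 1)"
        by (simp only: Gf_add Gf_cmult)
      finally show ?thesis by (simp add: bs_def as_def zs_def field_simps)
    qed
    moreover have "(?S + ?S * ?S) * exp ?S + (- 2 * ?S) * (?S * exp ?S) + ?S ^ 2 * exp ?S = ?S * exp ?S"
      by (simp add: power2_eq_square algebra_simps)
    ultimately show ?thesis using sV by simp
  qed
  show "bvar \<sigma> x ncycles = ?S"
    unfolding bvar_def E using boltz_integral(2)[OF x(1) \<sigma> _ eV] bn by simp
qed


lemma geom_Suc_sums:
  fixes r :: real assumes r: "\<bar>r\<bar> < 1"
  shows "(\<lambda>n. real (Suc n) * r ^ n) sums (1 / (1 - r) ^ 2)"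
proof -
  have g: "summable (\<lambda>n. norm (r ^ n))" using summable_geometric[of "\<bar>r\<bar>"] r by (simp add: power_abs)
  have "(\<lambda>k. \<Sum>i\<le>k. r ^ i * r ^ (k - i)) sums ((\<Sum>n. r ^ n) * (\<Sum>n. r ^ n))"
    by (rule Cauchy_product_sums[OF g g])
  moreover have "(\<Sum>i\<le>k. r ^ i * r ^ (k - i)) = real (Suc k) * r ^ k" for k
  proof -
    have "(\<Sum>i\<le>k. r ^ i * r ^ (k - i)) = (\<Sum>i\<le>k. r ^ k)"
      by (rule sum.cong) (auto simp: power_add[symmetric])
    thus ?thesis by simp
  qed
  moreover have "(\<Sum>n. r ^ n) = 1 / (1 - r)" using r by (simp add: suminf_geometric)
  ultimately show ?thesis by (simp add: power2_eq_square)
qed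

lemma geom_n_sums:
  fixes r :: real assumes r: "\<bar>r\<bar> < 1"
  shows "(\<lambda>n. real n * r ^ n) sums (r / (1 - r) ^ 2)"
proof -
  have "(\<lambda>n. real (Suc n) * r ^ n - r ^ n) sums (1 / (1 - r) ^ 2 - 1 / (1 - r))"
    by (intro sums_diff geom_Suc_sums geometric_sums) (use r in auto)
  moreover have "1 / (1 - r) ^ 2 - 1 / (1 - r) = r / (1 - r) ^ 2"
  proof -
    have nz: "1 - r \<noteq> 0" using r by auto
    have l1: "(u::real) \<noteq> 0 \<Longrightarrow> 1 / u ^ 2 - 1 / u = (1 - u) / u ^ 2" for u
      by (simp add: power2_eq_square diff_divide_distrib)
    show ?thesis using l1[of "1 - r"] nz by simp
  qed
  ultimately show ?thesis by (simp add: algebra_simps)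
qed

lemma alg: fixes u E T a x :: real
  assumes "u \<noteq> 0" "E = T / u - a * (x / u ^ 2)" shows "a * x + u ^ 2 * E = u * T"
proof -
  have "u ^ 2 * E = u ^ 2 * (T / u) - u ^ 2 * (a * (x / u ^ 2))" using assms(2) by (simp add: right_diff_distrib)
  also have "u ^ 2 * (T / u) = u * T" using assms(1) by (simp add: power2_eq_square)
  also have "u ^ 2 * (a * (x / u ^ 2)) = a * x" using assms(1) by simp
  finally show ?thesis by simp
qed

definition sp :: "(nat \<Rightarrow> real) \<Rightarrow> nat \<Rightarrow> real" where "sp \<sigma> n = (\<Sum>k=1..n. \<sigma> k)"

lemma Hs_from_mean:
  assumes nonneg: "\<forall>k\<ge>1. \<sigma> k \<ge> 0"
    and mean: "(\<lambda>n. (\<Sum>k=1..n. \<sigma> k) / real n) \<longlonglongrightarrow> \<alpha>"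
  shows "Hs \<sigma>"
proof -
  obtain C where C: "C > 0" "\<And>n. norm ((\<Sum>k=1..n. \<sigma> k) / real n) \<le> C"
    using convergent_imp_Bseq[OF convergentI[OF mean]] by (auto simp: Bseq_def)
  have bnd: "\<sigma> (Suc k) \<le> C * real (Suc k)" for k
  proof -
    have "\<sigma> (Suc k) \<le> (\<Sum>j=1..Suc k. \<sigma> j)"
      by (rule member_le_sum) (use nonneg in auto)
    also have "\<dots> \<le> C * real (Suc k)"
      using C(2)[of "Suc k"] by (simp add: divide_le_eq abs_le_iff del: of_nat_Suc)
    finally show ?thesis .
  qed
  show ?thesis unfolding Hs_def pg_def
  proof (intro conjI)
    show "\<forall>k\<ge>1. 0 \<le> \<sigma> k" by (rule nonneg)
    show "\<forall>n. 0 \<le> \<sigma> (Suc n)" using nonneg by simp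
  next
    show "\<forall>r. 0 \<le> r \<and> r < 1 \<longrightarrow> summable (\<lambda>n. \<sigma> (Suc n) * r ^ n)"
    proof (intro allI impI)
    fix r :: real assume r: "0 \<le> r \<and> r < 1"
    have s: "summable (\<lambda>n. C * (real (Suc n) * r ^ n))"
      using sums_summable[OF sums_mult[OF geom_Suc_sums]] r by simp
    show "summable (\<lambda>n. \<sigma> (Suc n) * r ^ n)"
    proof (rule summable_comparison_test'[OF s])
      fix n
      have "norm (\<sigma> (Suc n) * r ^ n) = \<sigma> (Suc n) * r ^ n" using nonneg r by simp
      also have "\<dots> \<le> C * real (Suc n) * r ^ n" using bnd[of n] r by (intro mult_right_mono) auto
      finally show "norm (\<sigma> (Suc n) * r ^ n) \<le> C * (real (Suc n) * r ^ n)" by (simp add: mult_ac)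
    qed
    qed
  qed
qed

lemma Tfun_eq': assumes H: "Hs \<sigma>" and y: "\<bar>y\<bar> < 1" shows "Tfun \<sigma> y = y * sf \<sigma> y"
proof -
  have s: "pg (\<lambda>k. \<sigma> (Suc k))" using H unfolding Hs_def by auto
  have "(\<lambda>n. \<sigma> (Suc n) * y ^ n) sums sf \<sigma> y" unfolding sf_def PS_def
    using pg_summable[OF s y] by (simp add: summable_sums)
  hence "(\<lambda>n. y * (\<sigma> (Suc n) * y ^ n)) sums (y * sf \<sigma> y)" by (rule sums_mult)
  hence "(\<lambda>n. Tc \<sigma> (Suc n) * y ^ Suc n) sums (y * sf \<sigma> y)" by (simp add: Tc_def mult_ac)
  hence "(\<lambda>n. Tc \<sigma> n * y ^ n) sums (y * sf \<sigma> y + Tc \<sigma> 0 * y ^ 0)"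
    by (subst sums_Suc_iff[symmetric])
  hence "(\<lambda>n. Tc \<sigma> n * y ^ n) sums (y * sf \<sigma> y)" by (simp add: Tc_def)
  thus ?thesis unfolding Tfun_def PS_def by (rule sums_unique[symmetric])
qed

lemma sum_Tc: "(\<Sum>i\<le>k. Tc \<sigma> i) = sp \<sigma> k"
  unfolding sp_def by (induction k) (simp_all add: Tc_def)

lemma sp_sums:
  assumes H: "Hs \<sigma>" and x: "0 \<le> x" "x < 1"
  shows "(\<lambda>n. sp \<sigma> n * x ^ n) sums (Tfun \<sigma> x / (1 - x))"
proof -
  have ax: "\<bar>x\<bar> < 1" using x by simp
  have a: "summable (\<lambda>n. norm (Tc \<sigma> n * x ^ n))" by (rule pg_abs[OF pg_Tc[OF H] ax])
  have g: "summable (\<lambda>n. norm (x ^ n))" using summable_geometric[of "\<bar>x\<bar>"] ax by (simp add: power_abs)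
  have "(\<lambda>k. \<Sum>i\<le>k. (Tc \<sigma> i * x ^ i) * x ^ (k - i)) sums ((\<Sum>n. Tc \<sigma> n * x ^ n) * (\<Sum>n. x ^ n))"
    by (rule Cauchy_product_sums[OF a g])
  moreover have "(\<Sum>i\<le>k. (Tc \<sigma> i * x ^ i) * x ^ (k - i)) = sp \<sigma> k * x ^ k" for k
  proof -
    have "(\<Sum>i\<le>k. (Tc \<sigma> i * x ^ i) * x ^ (k - i)) = (\<Sum>i\<le>k. Tc \<sigma> i * x ^ k)"
    proof (rule sum.cong[OF refl])
      fix i assume "i \<in> {..k}"
      hence ee: "x ^ k = x ^ i * x ^ (k - i)" by (simp add: power_add[symmetric])
      show "(Tc \<sigma> i * x ^ i) * x ^ (k - i) = Tc \<sigma> i * x ^ k" unfolding ee by (simp only: mult_ac)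
    qed
    thus ?thesis by (simp add: sum_distrib_right[symmetric] sum_Tc)
  qed
  moreover have "(\<Sum>n. x ^ n) = 1 / (1 - x)" using ax by (simp add: suminf_geometric)
  ultimately show ?thesis unfolding Tfun_def PS_def by simp
qed

lemma ABEL:
  fixes e :: "nat \<Rightarrow> real"
  assumes lim: "(\<lambda>n. e n / real n) \<longlonglongrightarrow> 0"
  shows "((\<lambda>x. (1 - x) ^ 2 * (\<Sum>n. e n * x ^ n)) \<longlongrightarrow> 0) (at_left 1)"
proof (rule tendstoI)
  fix \<epsilon> :: real assume \<epsilon>: "\<epsilon> > 0"
  obtain N0 where N0: "\<And>n. n \<ge> N0 \<Longrightarrow> \<bar>e n / real n\<bar> < \<epsilon> / 2"
    using LIMSEQ_D[OF lim, of "\<epsilon> / 2"] \<epsilon> by auto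
  define N where "N = Suc N0"
  have eb: "\<bar>e n\<bar> \<le> \<epsilon> / 2 * real n" if "n \<ge> N" for n
  proof -
    have "n \<ge> N0" "n > 0" using that by (auto simp: N_def)
    hence "\<bar>e n\<bar> / real n < \<epsilon> / 2" using N0 by (simp add: abs_divide)
    thus ?thesis using \<open>n > 0\<close> by (simp add: divide_less_eq mult.commute)
  qed
  define K where "K = (\<Sum>n<N. \<bar>e n\<bar>)"
  have K0: "0 \<le> K" unfolding K_def by (simp add: sum_nonneg)
  have main: "\<bar>(1 - x) ^ 2 * (\<Sum>n. e n * x ^ n)\<bar> \<le> K * (1 - x) ^ 2 + \<epsilon> / 2" if x: "0 < x" "x < 1" for x
  proof -
    have ax: "\<bar>x\<bar> < 1" using x by simp
    define h where "h n = (if n < N then \<bar>e n\<bar> else 0) + \<epsilon> / 2 * (real (Suc n) * x ^ n)" for n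
    have s1: "(\<lambda>n. if n < N then \<bar>e n\<bar> else 0) sums K"
    proof -
      have "(\<lambda>n. if n < N then \<bar>e n\<bar> else 0) sums (\<Sum>n<N. if n < N then \<bar>e n\<bar> else 0)"
        by (rule sums_finite) auto
      thus ?thesis unfolding K_def by simp
    qed
    have s2: "(\<lambda>n. \<epsilon> / 2 * (real (Suc n) * x ^ n)) sums (\<epsilon> / 2 * (1 / (1 - x) ^ 2))"
      by (rule sums_mult[OF geom_Suc_sums[OF ax]])
    have hs: "h sums (K + \<epsilon> / 2 * (1 / (1 - x) ^ 2))" unfolding h_def by (rule sums_add[OF s1 s2])
    have le: "norm (\<bar>e n * x ^ n\<bar>) \<le> h n" for n
    proof (cases "n < N")
      case True
      have p1: "x ^ n \<le> 1" using x by (intro power_le_one) auto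
      have "\<bar>e n * x ^ n\<bar> = \<bar>e n\<bar> * x ^ n" using x by (simp add: abs_mult)
      also have "\<dots> \<le> \<bar>e n\<bar> * 1" by (rule mult_left_mono[OF p1]) simp
      finally have "\<bar>e n * x ^ n\<bar> \<le> \<bar>e n\<bar> * 1" .
      moreover have "0 \<le> \<epsilon> / 2 * (real (Suc n) * x ^ n)" using \<epsilon> x by simp
      ultimately show ?thesis using True unfolding h_def by simp
    next
      case False
      have "\<bar>e n * x ^ n\<bar> = \<bar>e n\<bar> * x ^ n" using x by (simp add: abs_mult)
      also have "\<dots> \<le> \<epsilon> / 2 * real n * x ^ n" using eb[of n] False x by (intro mult_right_mono) auto
      also have "\<dots> \<le> \<epsilon> / 2 * (real (Suc n) * x ^ n)" using \<epsilon> x by (simp add: mult_right_mono)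
      finally show ?thesis using False unfolding h_def by simp
    qed
    have sa: "summable (\<lambda>n. \<bar>e n * x ^ n\<bar>)" by (rule summable_comparison_test'[OF sums_summable[OF hs] le])
    have "\<bar>\<Sum>n. e n * x ^ n\<bar> \<le> (\<Sum>n. \<bar>e n * x ^ n\<bar>)" by (rule summable_rabs[OF sa])
    also have "\<dots> \<le> (\<Sum>n. h n)" using le by (intro suminf_le sa sums_summable[OF hs]) auto
    also have "\<dots> = K + \<epsilon> / 2 * (1 / (1 - x) ^ 2)" using hs by (simp add: sums_iff)
    finally have 1: "\<bar>\<Sum>n. e n * x ^ n\<bar> \<le> K + \<epsilon> / 2 * (1 / (1 - x) ^ 2)" .
    have "\<bar>(1 - x) ^ 2 * (\<Sum>n. e n * x ^ n)\<bar> = (1 - x) ^ 2 * \<bar>\<Sum>n. e n * x ^ n\<bar>" by (simp add: abs_mult)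
    also have "\<dots> \<le> (1 - x) ^ 2 * (K + \<epsilon> / 2 * (1 / (1 - x) ^ 2))" by (intro mult_left_mono 1) simp
    also have "\<dots> = K * (1 - x) ^ 2 + \<epsilon> / 2" using x by (simp add: field_simps)
    finally show ?thesis .
  qed
  have "((\<lambda>x. K * (1 - x) ^ 2) \<longlongrightarrow> K * (1 - 1) ^ 2) (at_left (1::real))"
    by (intro tendsto_intros)
  hence "eventually (\<lambda>x. K * (1 - x) ^ 2 < \<epsilon> / 2) (at_left (1::real))"
    using \<epsilon> by (intro order_tendstoD) auto
  moreover have "eventually (\<lambda>x. x \<in> {0<..<1}) (at_left (1::real))" by (rule eventually_at_left_real) simp
  ultimately show "eventually (\<lambda>x. dist ((1 - x) ^ 2 * (\<Sum>n. e n * x ^ n)) 0 < \<epsilon>) (at_left 1)"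
  proof eventually_elim
    case (elim x)
    thus ?case using main[of x] by simp
  qed
qed

context
  fixes \<sigma> :: "nat \<Rightarrow> real" and \<alpha> :: real
  assumes nonneg: "\<forall>k\<ge>1. \<sigma> k \<ge> 0"
    and mean: "(\<lambda>n. (\<Sum>k=1..n. \<sigma> k) / real n) \<longlonglongrightarrow> \<alpha>"
begin

lemma H: "Hs \<sigma>" by (rule Hs_from_mean[OF nonneg mean])

lemma ev01: "eventually (\<lambda>x. 0 < x \<and> x < 1) (at_left (1::real))"
  using eventually_at_left_real[of 0 1] by (auto elim: eventually_mono)

lemma Tlim: "((\<lambda>x. (1 - x) * Tfun \<sigma> x) \<longlongrightarrow> \<alpha>) (at_left 1)"
proof -
  define e where "e n = sp \<sigma> n - \<alpha> * real n" for n
  have "(\<lambda>n. sp \<sigma> n / real n - \<alpha>) \<longlonglongrightarrow> \<alpha> - \<alpha>"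
    using mean unfolding sp_def by (intro tendsto_diff) auto
  hence l0: "(\<lambda>n. sp \<sigma> n / real n - \<alpha>) \<longlonglongrightarrow> 0" by simp
  have "eventually (\<lambda>n. sp \<sigma> n / real n - \<alpha> = e n / real n) sequentially"
    using eventually_gt_at_top[of 0] by eventually_elim (simp add: e_def diff_divide_distrib)
  hence le: "(\<lambda>n. e n / real n) \<longlonglongrightarrow> 0" by (rule Lim_transform_eventually[OF l0])
  have A: "((\<lambda>x. (1 - x) ^ 2 * (\<Sum>n. e n * x ^ n)) \<longlongrightarrow> 0) (at_left 1)" by (rule ABEL[OF le])
  have B: "((\<lambda>x. \<alpha> * x + (1 - x) ^ 2 * (\<Sum>n. e n * x ^ n)) \<longlongrightarrow> \<alpha> * 1 + 0) (at_left 1)"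
    by (intro tendsto_intros A)
  have evq: "eventually (\<lambda>x. \<alpha> * x + (1 - x) ^ 2 * (\<Sum>n. e n * x ^ n) = (1 - x) * Tfun \<sigma> x) (at_left 1)"
    using ev01
  proof eventually_elim
    case (elim x)
    have ax: "\<bar>x\<bar> < 1" using elim by simp
    have "(\<lambda>n. sp \<sigma> n * x ^ n - \<alpha> * (real n * x ^ n)) sums (Tfun \<sigma> x / (1 - x) - \<alpha> * (x / (1 - x) ^ 2))"
      by (intro sums_diff sums_mult sp_sums[OF H] geom_n_sums ax) (use elim in auto)
    hence "(\<lambda>n. e n * x ^ n) sums (Tfun \<sigma> x / (1 - x) - \<alpha> * (x / (1 - x) ^ 2))"
      by (simp add: e_def algebra_simps)
    hence "(\<Sum>n. e n * x ^ n) = Tfun \<sigma> x / (1 - x) - \<alpha> * (x / (1 - x) ^ 2)" by (simp add: sums_iff)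
    moreover have "1 - x \<noteq> 0" using elim by simp
    ultimately show ?case by (rule alg[rotated])
  qed
  show ?thesis using Lim_transform_eventually[OF B evq] by simp
qed

lemma L_top: "filterlim (\<lambda>x::real. - ln (1 - x)) at_top (at_left 1)"
  by real_asymp

lemma S_over_L: "((\<lambda>x. Sfun \<sigma> x / (- ln (1 - x))) \<longlongrightarrow> \<alpha>) (at_left 1)"
proof (rule lhopital_left_at_top[OF L_top])
  show "eventually (\<lambda>x. 1 / (1 - x) \<noteq> 0) (at_left (1::real))"
    using ev01 by eventually_elim simp
  show "eventually (\<lambda>x. DERIV (Sfun \<sigma>) x :> sf \<sigma> x) (at_left 1)"
    using ev01 by eventually_elim (rule DERIV_Sfun[OF H], simp)
  show "eventually (\<lambda>x. DERIV (\<lambda>x. - ln (1 - x)) x :> 1 / (1 - x)) (at_left (1::real))"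
    using ev01 by (rule eventually_mono) (auto intro!: derivative_eq_intros simp: field_simps)
  have "((\<lambda>x. ((1 - x) * Tfun \<sigma> x) / x) \<longlongrightarrow> \<alpha>) (at_left 1)"
    using tendsto_divide[OF Tlim tendsto_ident_at[of 1 "{..<1}"]] by simp
  moreover have "eventually (\<lambda>x. ((1 - x) * Tfun \<sigma> x) / x = sf \<sigma> x / (1 / (1 - x))) (at_left 1)"
    using ev01
  proof eventually_elim
    case (elim x)
    thus ?case using Tfun_eq'[OF H, of x] by (simp add: field_simps)
  qed
  ultimately show "((\<lambda>x. sf \<sigma> x / (1 / (1 - x))) \<longlongrightarrow> \<alpha>) (at_left 1)"
    by (rule Lim_transform_eventually)
qed

context
  assumes pos: "\<alpha> > 0"
begin

lemma T_pos: "eventually (\<lambda>x. 0 < (1 - x) * Tfun \<sigma> x) (at_left 1)"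
  using order_tendstoD(1)[OF Tlim pos] .

lemma lnT_over_L: "((\<lambda>x. ln (Tfun \<sigma> x) / (- ln (1 - x))) \<longlongrightarrow> 1) (at_left 1)"
proof -
  have "((\<lambda>x. ln ((1 - x) * Tfun \<sigma> x)) \<longlongrightarrow> ln \<alpha>) (at_left 1)"
    by (rule tendsto_ln[OF Tlim]) (use pos in simp)
  hence "((\<lambda>x. ln ((1 - x) * Tfun \<sigma> x) / (- ln (1 - x))) \<longlongrightarrow> 0) (at_left 1)"
    by (rule tendsto_divide_0[OF _ filterlim_at_top_imp_at_infinity[OF L_top]])
  hence "((\<lambda>x. ln ((1 - x) * Tfun \<sigma> x) / (- ln (1 - x)) + 1) \<longlongrightarrow> 0 + 1) (at_left 1)"
    by (intro tendsto_intros)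
  hence "((\<lambda>x. ln ((1 - x) * Tfun \<sigma> x) / (- ln (1 - x)) + 1) \<longlongrightarrow> 1) (at_left 1)"
    by simp
  moreover have "eventually (\<lambda>x. ln ((1 - x) * Tfun \<sigma> x) / (- ln (1 - x)) + 1 = ln (Tfun \<sigma> x) / (- ln (1 - x))) (at_left 1)"
    using ev01 T_pos
  proof eventually_elim
    case (elim x)
    have t: "0 < Tfun \<sigma> x" using elim by (simp add: zero_less_mult_iff)
    have l: "ln (1 - x) < 0" using elim by simp
    have "ln ((1 - x) * Tfun \<sigma> x) = ln (1 - x) + ln (Tfun \<sigma> x)" using elim t by (simp add: ln_mult)
    thus ?case using l by (simp add: field_simps)
  qed
  ultimately show ?thesis by (rule Lim_transform_eventually)
qed

lemma ratio: "((\<lambda>x. Sfun \<sigma> x / (\<alpha> * ln (Tfun \<sigma> x))) \<longlongrightarrow> 1) (at_left 1)"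
proof -
  have "((\<lambda>x. (Sfun \<sigma> x / (- ln (1 - x))) / (\<alpha> * (ln (Tfun \<sigma> x) / (- ln (1 - x))))) \<longlongrightarrow> \<alpha> / (\<alpha> * 1)) (at_left 1)"
    by (intro tendsto_divide tendsto_mult S_over_L lnT_over_L tendsto_const) (use pos in simp)
  moreover have "eventually (\<lambda>x. (Sfun \<sigma> x / (- ln (1 - x))) / (\<alpha> * (ln (Tfun \<sigma> x) / (- ln (1 - x)))) =
      Sfun \<sigma> x / (\<alpha> * ln (Tfun \<sigma> x))) (at_left 1)"
    using ev01
  proof eventually_elim
    case (elim x)
    have l: "ln (1 - x) \<noteq> 0" using elim by simp
    thus ?case by (simp add: field_simps)
  qed
  ultimately show ?thesis using pos by (simp add: Lim_transform_eventually)
qed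

end

lemma T_mono:
  assumes "0 \<le> u" "u \<le> v" "v < 1"
  shows "Tfun \<sigma> u \<le> Tfun \<sigma> v"
  unfolding Tfun_def PS_def
proof (rule suminf_le)
  fix n show "Tc \<sigma> n * u ^ n \<le> Tc \<sigma> n * v ^ n"
    using assms pg_nonneg[OF pg_Tc[OF H]] by (intro mult_left_mono power_mono) auto
  show "summable (\<lambda>n. Tc \<sigma> n * u ^ n)" by (rule pg_summable[OF pg_Tc[OF H]]) (use assms in auto)
  show "summable (\<lambda>n. Tc \<sigma> n * v ^ n)" by (rule pg_summable[OF pg_Tc[OF H]]) (use assms in auto)
qed

lemma xmu_lim:
  fixes xmu :: "real \<Rightarrow> real"
  assumes ev: "eventually (\<lambda>\<mu>. 0 < xmu \<mu> \<and> xmu \<mu> < 1 \<and> Tfun \<sigma> (xmu \<mu>) = \<mu>) at_top"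
  shows "filterlim xmu (at_left 1) at_top"
proof (rule tendsto_imp_filterlim_at_left)
  show "eventually (\<lambda>\<mu>. xmu \<mu> < 1) at_top" using ev by (auto elim: eventually_mono)
  show "(xmu \<longlongrightarrow> 1) at_top"
  proof (rule tendstoI)
    fix \<epsilon> :: real assume \<epsilon>: "\<epsilon> > 0"
    define \<delta> where "\<delta> = min \<epsilon> (1/2)"
    have \<delta>: "0 < \<delta>" "\<delta> \<le> \<epsilon>" "\<delta> < 1" using \<epsilon> by (auto simp: \<delta>_def)
    have "eventually (\<lambda>\<mu>. \<mu> > Tfun \<sigma> (1 - \<delta>)) at_top" by (rule eventually_gt_at_top)
    with ev show "eventually (\<lambda>\<mu>. dist (xmu \<mu>) 1 < \<epsilon>) at_top"
    proof eventually_elim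
      case (elim \<mu>)
      have "xmu \<mu> > 1 - \<delta>"
      proof (rule ccontr)
        assume "\<not> xmu \<mu> > 1 - \<delta>"
        hence "Tfun \<sigma> (xmu \<mu>) \<le> Tfun \<sigma> (1 - \<delta>)" using elim \<delta> by (intro T_mono) auto
        thus False using elim by simp
      qed
      thus ?case using elim \<delta> by (simp add: dist_real_def)
    qed
  qed
qed

end



theorem theorem4p3:
  fixes \<sigma> :: "nat \<Rightarrow> real" and \<alpha> :: real
  assumes nonneg: "\<forall>k\<ge>1. \<sigma> k \<ge> 0"
    and mean: "(\<lambda>n. (\<Sum>k=1..n. \<sigma> k) / real n) \<longlonglongrightarrow> \<alpha>"
    and pos: "\<alpha> > 0"
  shows "(\<forall>x. 0 < x \<and> x < 1 \<longrightarrow> bexp \<sigma> x ncycles = bvar \<sigma> x ncycles)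
    \<and> (\<lambda>x. bexp \<sigma> x ncycles) \<sim>[at_left 1] (\<lambda>x. \<alpha> * ln (bexp \<sigma> x gsize))
    \<and> (\<forall>xmu :: real \<Rightarrow> real.
         eventually (\<lambda>\<mu>. 0 < xmu \<mu> \<and> xmu \<mu> < 1 \<and> bexp \<sigma> (xmu \<mu>) gsize = \<mu>) at_top
         \<longrightarrow> (\<lambda>\<mu>. bexp \<sigma> (xmu \<mu>) ncycles) \<sim>[at_top] (\<lambda>\<mu>. \<alpha> * ln \<mu>))"
proof (intro conjI allI impI)
  have H: "Hs \<sigma>" by (rule Hs_from_mean[OF nonneg mean])
  have vals: "bexp \<sigma> x ncycles = Sfun \<sigma> x \<and> bvar \<sigma> x ncycles = Sfun \<sigma> x \<and> bexp \<sigma> x gsize = Tfun \<sigma> x"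
    if "0 < x" "x < 1" for x
    using main_values[OF H that] by blast
  fix x :: real assume "0 < x \<and> x < 1"
  then show "bexp \<sigma> x ncycles = bvar \<sigma> x ncycles" using vals by simp
next
  have H: "Hs \<sigma>" by (rule Hs_from_mean[OF nonneg mean])
  have vals: "bexp \<sigma> x ncycles = Sfun \<sigma> x \<and> bvar \<sigma> x ncycles = Sfun \<sigma> x \<and> bexp \<sigma> x gsize = Tfun \<sigma> x"
    if "0 < x" "x < 1" for x
    using main_values[OF H that] by blast
  have R: "((\<lambda>x. Sfun \<sigma> x / (\<alpha> * ln (Tfun \<sigma> x))) \<longlongrightarrow> 1) (at_left 1)"
    by (rule ratio[OF nonneg mean pos])
  have e01: "eventually (\<lambda>x. 0 < x \<and> x < 1) (at_left (1::real))"
    using eventually_at_left_real[of 0 1] by (auto elim: eventually_mono)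
  have "eventually (\<lambda>x. Sfun \<sigma> x / (\<alpha> * ln (Tfun \<sigma> x)) = bexp \<sigma> x ncycles / (\<alpha> * ln (bexp \<sigma> x gsize))) (at_left 1)"
    using e01 by (rule eventually_mono) (use vals in simp)
  then have "((\<lambda>x. bexp \<sigma> x ncycles / (\<alpha> * ln (bexp \<sigma> x gsize))) \<longlongrightarrow> 1) (at_left 1)"
    by (rule Lim_transform_eventually[OF R])
  then show "(\<lambda>x. bexp \<sigma> x ncycles) \<sim>[at_left 1] (\<lambda>x. \<alpha> * ln (bexp \<sigma> x gsize))"
    by (rule asymp_equivI')
next
  fix xmu :: "real \<Rightarrow> real"
  assume ev: "eventually (\<lambda>\<mu>. 0 < xmu \<mu> \<and> xmu \<mu> < 1 \<and> bexp \<sigma> (xmu \<mu>) gsize = \<mu>) at_top"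
  have H: "Hs \<sigma>" by (rule Hs_from_mean[OF nonneg mean])
  have vals: "bexp \<sigma> x ncycles = Sfun \<sigma> x \<and> bvar \<sigma> x ncycles = Sfun \<sigma> x \<and> bexp \<sigma> x gsize = Tfun \<sigma> x"
    if "0 < x" "x < 1" for x
    using main_values[OF H that] by blast
  have ev': "eventually (\<lambda>\<mu>. 0 < xmu \<mu> \<and> xmu \<mu> < 1 \<and> Tfun \<sigma> (xmu \<mu>) = \<mu>) at_top"
    using ev by (rule eventually_mono) (use vals in auto)
  have fl: "filterlim xmu (at_left 1) at_top" by (rule xmu_lim[OF nonneg mean ev'])
  have R: "((\<lambda>x. Sfun \<sigma> x / (\<alpha> * ln (Tfun \<sigma> x))) \<longlongrightarrow> 1) (at_left 1)"
    by (rule ratio[OF nonneg mean pos])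
  have R2: "((\<lambda>\<mu>. Sfun \<sigma> (xmu \<mu>) / (\<alpha> * ln (Tfun \<sigma> (xmu \<mu>)))) \<longlongrightarrow> 1) at_top"
    by (rule filterlim_compose[OF R fl])
  have "eventually (\<lambda>\<mu>. Sfun \<sigma> (xmu \<mu>) / (\<alpha> * ln (Tfun \<sigma> (xmu \<mu>))) = bexp \<sigma> (xmu \<mu>) ncycles / (\<alpha> * ln \<mu>)) at_top"
    using ev' by (rule eventually_mono) (use vals in auto)
  then have "((\<lambda>\<mu>. bexp \<sigma> (xmu \<mu>) ncycles / (\<alpha> * ln \<mu>)) \<longlongrightarrow> 1) at_top"
    by (rule Lim_transform_eventually[OF R2])
  then show "(\<lambda>\<mu>. bexp \<sigma> (xmu \<mu>) ncycles) \<sim>[at_top] (\<lambda>\<mu>. \<alpha> * ln \<mu>)"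
    by (rule asymp_equivI')
qed

end
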